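(* Suppose Assumption I holds. Then there exists $\gamma>0$ such that $\langle\Im\mathcal T(\mathbf f,\mathbf g),(\mathbf f,\mathbf g)\rangle\ge\gamma\|(\mathbf f,\mathbf g)\|^2$ for all $(\mathbf f,\mathbf g)\in\mathrm{Range}(\mathcal H)\subset X$, where $\Im\mathcal T=(\mathcal T-\mathcal T^* )/(2i)$.
   Context: Let $k>0$ be fixed and let $\Omega\subset\mathbb{R}^3$ be a bounded Lipschitz domain with $\mathbb{R}^3\setminus\overline\Omega$ connected. Let $\varepsilon_r,\mu_r,\xi,\zeta:\mathbb{R}^3\to\mathbb{C}^{3\times3}$ with $\varepsilon_r=\mu_r=I_3$ and $\xi=\zeta=0$ in $\mathbb{R}^3\setminus\overline\Omega$; $\mu_r^{-1}$ denotes the pointwise matrix inverse of $\mu_r$. Set $P=\varepsilon_r-I_3$, $Q=I_3-\mu_r^{-1}$ (both supported in $\Omega$). $|\cdot|_F$ is the Frobenius norm. Assumption I: $\varepsilon_r,\mu_r,\mu_r^{-1},\xi,\zeta\in[L^\infty(\Omega)]^{3\times3}$ are symmetric (i.e. equal to their transposes) a.e., and there are constants $c_1,c_2,\alpha,\beta>0$ such that for all $a\in\mathbb{C}^3$, a.e. in $\Omega$: $\Re(\mu_r^{-1}a\cdot\overline a)\ge c_1|a|^2$, $\Re((\varepsilon_r-\xi\mu_r^{-1}\zeta)a\cdot\overline a)\ge c_2|a|^2$, $-\Im(\mu_r^{-1}a\cdot\overline a)\ge\alpha|a|^2$, $\Im((\varepsilon_r-\xi\mu_r^{-1}\zeta)a\cdot\overline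 a)\ge\beta|a|^2$, and $\||\mu_r^{-1}\xi|_F\|_{L^\infty}^2+\||\mu_r^{-1}\zeta|_F\|_{L^\infty}^2<2\min\{c_1c_2,\alpha\beta\}$. $H(\mathrm{curl},D)=\{\mathbf v\in[L^2(D)]^3:\mathrm{curl}\,\mathbf v\in[L^2(D)]^3\}$ with the graph inner product, and $H_{loc}(\mathrm{curl},\mathbb{R}^3)$ the fields whose restriction to every ball $B$ lies in $H(\mathrm{curl},B)$. Let $X=[L^2(\Omega)]^3\times[L^2(\Omega)]^3$ with inner product $\langle\cdot,\cdot\rangle$ and norm $\|\cdot\|$. Let $\mathbb S^2$ be the unit sphere and $\mathbf L^2_t(\mathbb S^2)=\{\mathbf v\in[L^2(\mathbb S^2)]^3:\hat{\mathbf x}\cdot\mathbf v(\hat{\mathbf x})=0\}$. Direct problem: for $(\mathbf f,\mathbf g)\in X$, $\mathbf u=\mathbf u[\mathbf f,\mathbf g]\in H_{loc}(\mathrm{curl},\mathbb{R}^3)$ is the solution of $\int_{\mathbb{R}^3}(\mathrm{curl}\,\mathbf u\cdot\mathrm{curl}\,\overline{\mathbf v}-k^2\mathbf u\cdot\overline{\mathbf v})\,dx=\int_\Omega[k^2(P-\xi\mu_r^{-1}\zeta)(\mathbf u+\mathbf f)-ik\xi\mu_r^{-1}(\mathrm{curl}\,\mathbf u+\mathbf g)]\cdot\overline{\mathbf v}+[ik\mu_r^{-1}\zeta(\mathbf u+\mathbf f)+Q(\mathrm{curl}\,\mathbf u+\mathbf g)]\cdot\mathrm{curl}\,\overline{\mathbf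 v}\,dx$ for all compactly supported $\mathbf v\in H(\mathrm{curl},\mathbb{R}^3)$, together with the Silver–Müller radiation condition $\mathrm{curl}\,\mathbf u\times\frac{x}{|x|}-ik\mathbf u=O(|x|^{-2})$ as $|x|\to\infty$ uniformly in $x/|x|$. It is known (and may be used) that under Assumption I this problem is uniquely solvable, $\|\mathbf u\|_{H(\mathrm{curl},\Omega)}\le c\|(\mathbf f,\mathbf g)\|$, and moreover $\|\mathbf u\|_{H(\mathrm{curl},\Omega)}\le C_1\|\mathbf f+\mathbf u\|+C_2\|\mathbf g+\mathrm{curl}\,\mathbf u\|$ for constants $C_1,C_2>0$. The far-field pattern $\mathbf u^\infty$ of $\mathbf u$ is defined by $\mathbf u(x)=\frac{e^{ik|x|}}{|x|}\big(\mathbf u^\infty(\hat x)+O(|x|^{-1})\big)$, $\hat x=x/|x|$. Herglotz operator $\mathcal H:\mathbf L^2_t(\mathbb S^2)\to X$, $\mathcal H\mathbf g=(\mathcal H_1\mathbf g,\mathrm{curl}\,\mathcal H_1\mathbf g)$ where $(\mathcal H_1\mathbf g)(\mathbf x)=\int_{\mathbb S^2}\mathbf g(\mathbf d)e^{ik\mathbf x\cdot\mathbf d}ds(\mathbf d)$, $\mathbf x\in\Omega$. Middle operator $\mathcal T=(\mathcal T_1,\mathcal T_2):X\to X$ (bounded and linear under Assumption I), $\mathcal T_1(\mathbf f,\mathbf g)=k^2(P-\xi\mu_r^{-1}\zeta)(\mathbf u+\mathbf f)-ik\xi\mu_r^{-1}(\mathrm{curl}\,\mathbf u+\mathbf g)$,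 $\mathcal T_2(\mathbf f,\mathbf g)=ik\mu_r^{-1}\zeta(\mathbf u+\mathbf f)+Q(\mathrm{curl}\,\mathbf u+\mathbf g)$ on $\Omega$, with $\mathbf u=\mathbf u[\mathbf f,\mathbf g]$. *)

theory Defs
  imports "HOL-Analysis.Analysis"
begin

type_synonym R3 = "real^3"
type_synonym C3 = "complex^3"
type_synonym M3 = "complex^3^3"

text \<open>bilinear dot product a . b (no conjugation)\<close>
definition cdot :: "C3 \<Rightarrow> C3 \<Rightarrow> complex" where
  "cdot a b = (\<Sum>i\<in>UNIV. a$i * b$i)"

definition vcnj :: "C3 \<Rightarrow> C3" where
  "vcnj a = (\<chi> i. cnj (a$i))"

definition cvec :: "R3 \<Rightarrow> C3" where
  "cvec x = (\<chi> i. complex_of_real (x$i))"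

definition ccross :: "C3 \<Rightarrow> C3 \<Rightarrow> C3" where
  "ccross a b = vector [a$2 * b$3 - a$3 * b$2, a$3 * b$1 - a$1 * b$3, a$1 * b$2 - a$2 * b$1]"

definition frob :: "M3 \<Rightarrow> real" where
  "frob A = sqrt (\<Sum>i\<in>UNIV. \<Sum>j\<in>UNIV. (cmod (A$i$j))^2)"

definition symmetric_mat :: "M3 \<Rightarrow> bool" where
  "symmetric_mat A \<longleftrightarrow> transpose A = A"

definition pd :: "(R3 \<Rightarrow> C3) \<Rightarrow> 3 \<Rightarrow> R3 \<Rightarrow> C3" where
  "pd F j x = frechet_derivative F (at x) (axis j 1)"

definition ccurl :: "(R3 \<Rightarrow> C3) \<Rightarrow> R3 \<Rightarrow> C3" where
  "ccurl F x = vector [ pd F 2 x $ 3 - pd F 3 x $ 2,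
                        pd F 3 x $ 1 - pd F 1 x $ 3,
                        pd F 1 x $ 2 - pd F 2 x $ 1 ]"

definition lipschitz_domain :: "R3 set \<Rightarrow> bool" where
  "lipschitz_domain \<Omega> \<longleftrightarrow> open \<Omega> \<and> connected \<Omega> \<and> \<Omega> \<noteq> {} \<and>
     (\<forall>p\<in>frontier \<Omega>. \<exists>r>0. \<exists>R::R3\<Rightarrow>R3. \<exists>\<phi>::real\<times>real\<Rightarrow>real. \<exists>L.
        orthogonal_transformation R \<and> L-lipschitz_on UNIV \<phi> \<and>
        (\<forall>x\<in>ball p r. x \<in> \<Omega> \<longleftrightarrow> (R (x - p))$3 < \<phi> ((R (x - p))$1, (R (x - p))$2)))"

definition L2on :: "R3 set \<Rightarrow> (R3 \<Rightarrow> C3) \<Rightarrow> bool" where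
  "L2on D f \<longleftrightarrow> (\<lambda>x. indicator D x *\<^sub>R f x) \<in> borel_measurable lebesgue \<and>
      (\<integral>\<^sup>+ x. ennreal (indicator D x * (norm (f x))^2) \<partial>lebesgue) < \<infinity>"

definition L2loc :: "(R3 \<Rightarrow> C3) \<Rightarrow> bool" where
  "L2loc f \<longleftrightarrow> (\<forall>r. L2on (ball 0 r) f)"

definition ip :: "R3 set \<Rightarrow> (R3 \<Rightarrow> C3) \<Rightarrow> (R3 \<Rightarrow> C3) \<Rightarrow> complex" where
  "ip D F G = (LINT x:D|lebesgue. cdot (F x) (vcnj (G x)))"

definition ipX :: "R3 set \<Rightarrow> (R3 \<Rightarrow> C3) \<times> (R3 \<Rightarrow> C3) \<Rightarrow> (R3 \<Rightarrow> C3) \<times> (R3 \<Rightarrow> C3) \<Rightarrow> complex" where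
  "ipX D FF GG = ip D (fst FF) (fst GG) + ip D (snd FF) (snd GG)"

definition L2norm :: "R3 set \<Rightarrow> (R3 \<Rightarrow> C3) \<Rightarrow> real" where
  "L2norm D f = sqrt (LINT x:D|lebesgue. (norm (f x))^2)"

text \<open>norm of X; also the H(curl,D) norm of u when the second component is curl u\<close>
definition normX :: "R3 set \<Rightarrow> (R3 \<Rightarrow> C3) \<Rightarrow> (R3 \<Rightarrow> C3) \<Rightarrow> real" where
  "normX D f g = sqrt (LINT x:D|lebesgue. (norm (f x))^2 + (norm (g x))^2)"

definition test_fun :: "(R3 \<Rightarrow> C3) \<Rightarrow> bool" where
  "test_fun \<phi> \<longleftrightarrow> (\<forall>x. \<phi> differentiable (at x)) \<and> (\<forall>j. continuous_on UNIV (pd \<phi> j)) \<and>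
     bounded {x. \<phi> x \<noteq> 0}"

definition Hloc_curl :: "(R3 \<Rightarrow> C3) \<Rightarrow> (R3 \<Rightarrow> C3) \<Rightarrow> bool" where
  "Hloc_curl u w \<longleftrightarrow> L2loc u \<and> L2loc w \<and>
     (\<forall>\<phi>. test_fun \<phi> \<longrightarrow>
        (\<integral>x. cdot (u x) (ccurl \<phi> x) \<partial>lebesgue) = (\<integral>x. cdot (w x) (\<phi> x) \<partial>lebesgue))"

definition Hcurl_cs :: "(R3 \<Rightarrow> C3) \<Rightarrow> (R3 \<Rightarrow> C3) \<Rightarrow> bool" where
  "Hcurl_cs v cv \<longleftrightarrow> Hloc_curl v cv \<and> L2on UNIV v \<and> L2on UNIV cv \<and>
     (\<exists>R. AE x in lebesgue. R < norm x \<longrightarrow> v x = 0)"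

definition Pm :: "(R3 \<Rightarrow> M3) \<Rightarrow> R3 \<Rightarrow> M3" where
  "Pm eps x = eps x - mat 1"

definition Qm :: "(R3 \<Rightarrow> M3) \<Rightarrow> R3 \<Rightarrow> M3" where
  "Qm mu x = mat 1 - matrix_inv (mu x)"

text \<open>T_1(f,g) (pointwise), with u = u[f,g] and w = curl u\<close>
definition T1 :: "real \<Rightarrow> (R3 \<Rightarrow> M3) \<Rightarrow> (R3 \<Rightarrow> M3) \<Rightarrow> (R3 \<Rightarrow> M3) \<Rightarrow> (R3 \<Rightarrow> M3) \<Rightarrow>
    (R3 \<Rightarrow> C3) \<Rightarrow> (R3 \<Rightarrow> C3) \<Rightarrow> (R3 \<Rightarrow> C3) \<Rightarrow> (R3 \<Rightarrow> C3) \<Rightarrow> R3 \<Rightarrow> C3" where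
  "T1 k eps mu xi zeta f g u w x =
     complex_of_real (k^2) *s ((Pm eps x - xi x ** matrix_inv (mu x) ** zeta x) *v (u x + f x))
     - (\<i> * complex_of_real k) *s ((xi x ** matrix_inv (mu x)) *v (w x + g x))"

definition T2 :: "real \<Rightarrow> (R3 \<Rightarrow> M3) \<Rightarrow> (R3 \<Rightarrow> M3) \<Rightarrow> (R3 \<Rightarrow> M3) \<Rightarrow> (R3 \<Rightarrow> M3) \<Rightarrow>
    (R3 \<Rightarrow> C3) \<Rightarrow> (R3 \<Rightarrow> C3) \<Rightarrow> (R3 \<Rightarrow> C3) \<Rightarrow> (R3 \<Rightarrow> C3) \<Rightarrow> R3 \<Rightarrow> C3" where
  "T2 k eps mu xi zeta f g u w x =
     (\<i> * complex_of_real k) *s ((matrix_inv (mu x) ** zeta x) *v (u x + f x))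
     + Qm mu x *v (w x + g x)"

definition silver_mueller :: "real \<Rightarrow> (R3 \<Rightarrow> C3) \<Rightarrow> (R3 \<Rightarrow> C3) \<Rightarrow> bool" where
  "silver_mueller k u w \<longleftrightarrow> (\<exists>R C. AE x in lebesgue. R \<le> norm x \<longrightarrow>
      norm (ccross (w x) (cvec (x /\<^sub>R norm x)) - (\<i> * complex_of_real k) *s u x) \<le> C / (norm x)^2)"

definition solves :: "real \<Rightarrow> R3 set \<Rightarrow> (R3 \<Rightarrow> M3) \<Rightarrow> (R3 \<Rightarrow> M3) \<Rightarrow> (R3 \<Rightarrow> M3) \<Rightarrow> (R3 \<Rightarrow> M3) \<Rightarrow>
    (R3 \<Rightarrow> C3) \<Rightarrow> (R3 \<Rightarrow> C3) \<Rightarrow> (R3 \<Rightarrow> C3) \<Rightarrow> (R3 \<Rightarrow> C3) \<Rightarrow> bool" where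
  "solves k \<Omega> eps mu xi zeta f g u w \<longleftrightarrow> Hloc_curl u w \<and>
     (\<forall>v cv. Hcurl_cs v cv \<longrightarrow>
        (\<integral>x. cdot (w x) (vcnj (cv x)) - complex_of_real (k^2) * cdot (u x) (vcnj (v x)) \<partial>lebesgue)
        = (LINT x:\<Omega>|lebesgue. cdot (T1 k eps mu xi zeta f g u w x) (vcnj (v x))
                             + cdot (T2 k eps mu xi zeta f g u w x) (vcnj (cv x)))) \<and>
     silver_mueller k u w"

definition Linf_on :: "R3 set \<Rightarrow> (R3 \<Rightarrow> M3) \<Rightarrow> bool" where
  "Linf_on D A \<longleftrightarrow> (\<lambda>x. indicator D x *\<^sub>R A x) \<in> borel_measurable lebesgue \<and>
     (\<exists>B. AE x in lebesgue. x \<in> D \<longrightarrow> norm (A x) \<le> B)"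

definition assumption_I :: "R3 set \<Rightarrow> (R3 \<Rightarrow> M3) \<Rightarrow> (R3 \<Rightarrow> M3) \<Rightarrow> (R3 \<Rightarrow> M3) \<Rightarrow> (R3 \<Rightarrow> M3) \<Rightarrow> bool" where
  "assumption_I \<Omega> eps mu xi zeta \<longleftrightarrow>
     (AE x in lebesgue. x \<in> \<Omega> \<longrightarrow> invertible (mu x)) \<and>
     Linf_on \<Omega> eps \<and> Linf_on \<Omega> mu \<and> Linf_on \<Omega> (\<lambda>x. matrix_inv (mu x)) \<and>
     Linf_on \<Omega> xi \<and> Linf_on \<Omega> zeta \<and>
     (AE x in lebesgue. x \<in> \<Omega> \<longrightarrow> symmetric_mat (eps x) \<and> symmetric_mat (mu x) \<and>
        symmetric_mat (matrix_inv (mu x)) \<and> symmetric_mat (xi x) \<and> symmetric_mat (zeta x)) \<and>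
     (\<exists>c1 c2 \<alpha> \<beta>. c1 > 0 \<and> c2 > 0 \<and> \<alpha> > 0 \<and> \<beta> > 0 \<and>
        (AE x in lebesgue. x \<in> \<Omega> \<longrightarrow> (\<forall>a::C3.
           Re (cdot (matrix_inv (mu x) *v a) (vcnj a)) \<ge> c1 * (norm a)^2 \<and>
           Re (cdot ((eps x - xi x ** matrix_inv (mu x) ** zeta x) *v a) (vcnj a)) \<ge> c2 * (norm a)^2 \<and>
           - Im (cdot (matrix_inv (mu x) *v a) (vcnj a)) \<ge> \<alpha> * (norm a)^2 \<and>
           Im (cdot ((eps x - xi x ** matrix_inv (mu x) ** zeta x) *v a) (vcnj a)) \<ge> \<beta> * (norm a)^2)) \<and>
        (\<exists>s t. s^2 + t^2 < 2 * min (c1 * c2) (\<alpha> * \<beta>) \<and>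
           (AE x in lebesgue. x \<in> \<Omega> \<longrightarrow>
              frob (matrix_inv (mu x) ** xi x) \<le> s \<and> frob (matrix_inv (mu x) ** zeta x) \<le> t)))"

text \<open>spherical parametrisation of S^2; surface measure ds = sin theta dtheta dphi\<close>
definition sdir :: "real \<Rightarrow> real \<Rightarrow> R3" where
  "sdir \<theta> \<phi> = vector [sin \<theta> * cos \<phi>, sin \<theta> * sin \<phi>, cos \<theta>]"

definition sph_param :: "(real \<times> real) set" where
  "sph_param = {0..pi} \<times> {0..2*pi}"

definition L2t :: "(R3 \<Rightarrow> C3) \<Rightarrow> bool" where
  "L2t h \<longleftrightarrow>
     (\<lambda>p. indicator sph_param p *\<^sub>R h (sdir (fst p) (snd p))) \<in> borel_measurable lebesgue \<and>
     (\<integral>\<^sup>+ p. ennreal (indicator sph_param p * sin (fst p) * (norm (h (sdir (fst p) (snd p))))^2) \<partial>lebesgue) < \<infinity> \<and>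
     (AE p in lebesgue. p \<in> sph_param \<longrightarrow> cdot (cvec (sdir (fst p) (snd p))) (h (sdir (fst p) (snd p))) = 0)"

definition herglotz1 :: "real \<Rightarrow> (R3 \<Rightarrow> C3) \<Rightarrow> R3 \<Rightarrow> C3" where
  "herglotz1 k h x = (\<integral>p. (indicator sph_param p * sin (fst p)) *\<^sub>R
       (exp (\<i> * complex_of_real (k * (x \<bullet> sdir (fst p) (snd p)))) *s h (sdir (fst p) (snd p))) \<partial>lebesgue)"

end

theory Submission
  imports Defs "HOL-Probability.Characteristic_Functions"
begin

lemma frob_norm: "frob A = norm A"
  unfolding frob_def norm_vec_def L2_set_def by (simp add: sum_nonneg)

lemma norm_sq_vec3: "(norm (a::C3))^2 = (\<Sum>i\<in>UNIV. (cmod (a$i))^2)"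
  unfolding norm_vec_def L2_set_def by (simp add: sum_nonneg)

lemma cdot_self: "cdot a (vcnj a) = of_real ((norm a)^2)"
proof -
  have "cdot a (vcnj a) = (\<Sum>i\<in>UNIV. of_real ((cmod (a$i))^2))"
    unfolding cdot_def vcnj_def by (simp add: complex_norm_square del: of_real_power)
  also have "\<dots> = of_real ((norm a)^2)" by (simp add: norm_sq_vec3)
  finally show ?thesis .
qed

lemma norm_vcnj[simp]: "norm (vcnj a) = norm a"
  unfolding norm_vec_def vcnj_def by simp

lemma cdot_bound: "cmod (cdot a b) \<le> norm a * norm b"
proof -
  have "cmod (cdot a b) \<le> (\<Sum>i\<in>UNIV. cmod (a$i) * cmod (b$i))"
    unfolding cdot_def by (rule order_trans[OF norm_sum]) (simp add: norm_mult)
  also have "\<dots> = (\<Sum>i\<in>UNIV. \<bar>cmod (a$i)\<bar> * \<bar>cmod (b$i)\<bar>)" by simp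
  also have "\<dots> \<le> L2_set (\<lambda>i. cmod (a$i)) UNIV * L2_set (\<lambda>i. cmod (b$i)) UNIV"
    by (rule L2_set_mult_ineq)
  finally show ?thesis by (simp add: norm_vec_def)
qed

lemma cdot_comm: "cdot a b = cdot b a"
  unfolding cdot_def by (simp add: mult.commute)

lemma cdot_add_left: "cdot (a + b) c = cdot a c + cdot b c"
  unfolding cdot_def by (simp add: distrib_right sum.distrib)
lemma cdot_add_right: "cdot c (a + b) = cdot c a + cdot c b"
  unfolding cdot_def by (simp add: distrib_left sum.distrib)
lemma cdot_diff_left: "cdot (a - b) c = cdot a c - cdot b c"
  unfolding cdot_def by (simp add: left_diff_distrib sum_subtractf)
lemma cdot_diff_right: "cdot c (a - b) = cdot c a - cdot c b"
  unfolding cdot_def by (simp add: right_diff_distrib sum_subtractf)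
lemma cdot_scale_left: "cdot (r *s a) c = r * cdot a c"
  unfolding cdot_def by (simp add: sum_distrib_left mult.assoc)
lemma cdot_scale_right: "cdot c (r *s a) = r * cdot c a"
  unfolding cdot_def by (simp add: sum_distrib_left mult.left_commute)
lemma vcnj_add: "vcnj (a + b) = vcnj a + vcnj b"
  unfolding vcnj_def by (simp add: vec_eq_iff)

lemma cdot_transpose: "cdot (A *v a) b = cdot a (transpose A *v b)"
  unfolding cdot_def matrix_vector_mult_def transpose_def
  by (simp add: sum_distrib_left sum_distrib_right mult_ac) (rule sum.swap)

lemma norm_mat_vec: "norm ((A::M3) *v x) \<le> norm A * norm x"
proof -
  have c: "cmod ((A *v x)$i) \<le> norm (A$i) * norm x" for i
  proof -
    have "(A *v x)$i = cdot (A$i) x" unfolding matrix_vector_mult_def cdot_def by simp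
    thus ?thesis using cdot_bound by simp
  qed
  have "(norm (A *v x))^2 = (\<Sum>i\<in>UNIV. (cmod ((A *v x)$i))^2)" by (rule norm_sq_vec3)
  also have "\<dots> \<le> (\<Sum>i\<in>UNIV. (norm (A$i) * norm x)^2)"
    by (rule sum_mono) (use c in \<open>simp add: power_mono\<close>)
  also have "\<dots> = (\<Sum>i\<in>UNIV. (norm (A$i))^2) * (norm x)^2"
    by (simp add: power_mult_distrib sum_distrib_right)
  also have "(\<Sum>i\<in>UNIV. (norm (A$i))^2) = (norm A)^2"
    unfolding norm_vec_def L2_set_def by (simp add: sum_nonneg)
  finally have "(norm (A *v x))^2 \<le> (norm A * norm x)^2" by (simp add: power_mult_distrib)
  thus ?thesis by (rule power2_le_imp_le) simp
qed

lemma quad_nonneg: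
  fixes p q c X Y :: real
  assumes "p > 0" "q \<ge> 0" "c\<^sup>2 \<le> 4 * p * q"
  shows "p * X\<^sup>2 + q * Y\<^sup>2 - c * X * Y \<ge> 0"
proof -
  have "p * (p * X\<^sup>2 + q * Y\<^sup>2 - c * X * Y) = (p * X - c * Y / 2)\<^sup>2 + (p * q - c\<^sup>2 / 4) * Y\<^sup>2"
    by (simp add: power2_eq_square algebra_simps)
  also have "\<dots> \<ge> 0" using assms by (intro add_nonneg_nonneg) auto
  finally show ?thesis using assms(1) by (simp add: zero_le_mult_iff)
qed

definition lamc :: "real \<Rightarrow> real \<Rightarrow> real \<Rightarrow> real \<Rightarrow> real" where
  "lamc \<alpha> \<beta> s t = min (min \<alpha> \<beta> / 2) ((\<alpha> * \<beta> - ((s + t) / 2)\<^sup>2) / (\<alpha> + \<beta>))"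

lemma lamc_pos:
  assumes "\<alpha> > 0" "\<beta> > 0" "s \<ge> 0" "t \<ge> 0" "s\<^sup>2 + t\<^sup>2 < 2 * min (c1*c2) (\<alpha> * \<beta>)"
  shows "lamc \<alpha> \<beta> s t > 0"
proof -
  have "0 \<le> (s - t)\<^sup>2" by simp
  hence "(s + t)\<^sup>2 \<le> 2 * (s\<^sup>2 + t\<^sup>2)" by (simp add: power2_eq_square algebra_simps)
  hence "((s + t) / 2)\<^sup>2 < \<alpha> * \<beta>" using assms(5) by (simp add: power_divide)
  thus ?thesis unfolding lamc_def using assms by auto
qed

lemma quad_lam:
  assumes "\<alpha> > 0" "\<beta> > 0" "s \<ge> 0" "t \<ge> 0" "((s + t) / 2)\<^sup>2 < \<alpha> * \<beta>"
  shows "\<beta> * X\<^sup>2 + \<alpha> * Y\<^sup>2 - (s + t) * X * Y \<ge> lamc \<alpha> \<beta> s t * (X\<^sup>2 + Y\<^sup>2)"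
proof -
  define l where "l = lamc \<alpha> \<beta> s t"
  define \<delta> where "\<delta> = \<alpha> * \<beta> - ((s + t) / 2)\<^sup>2"
  have l1: "l \<le> min \<alpha> \<beta> / 2" unfolding l_def lamc_def by (rule min.cobounded1)
  have l2: "l \<le> \<delta> / (\<alpha> + \<beta>)" unfolding l_def lamc_def \<delta>_def by (rule min.cobounded2)
  have "l * (\<alpha> + \<beta>) \<le> \<delta>" using l2 assms by (simp add: pos_le_divide_eq)
  have "l \<ge> 0 \<or> l < 0" by auto
  have "(\<beta> - l) * (\<alpha> - l) = \<alpha> * \<beta> - l * (\<alpha> + \<beta>) + l * l" by (simp add: algebra_simps)
  have key: "(s + t)\<^sup>2 \<le> 4 * (\<beta> - l) * (\<alpha> - l)"
  proof (cases "l \<ge> 0")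
    case True
    have "(\<beta> - l) * (\<alpha> - l) \<ge> \<alpha> * \<beta> - l * (\<alpha> + \<beta>)"
      using \<open>(\<beta> - l) * (\<alpha> - l) = _\<close> True by (simp add: zero_le_mult_iff)
    hence "(\<beta> - l) * (\<alpha> - l) \<ge> ((s + t) / 2)\<^sup>2" using \<open>l * (\<alpha> + \<beta>) \<le> \<delta>\<close> unfolding \<delta>_def by linarith
    hence "(s + t)\<^sup>2 \<le> 4 * ((\<beta> - l) * (\<alpha> - l))" by (simp add: power_divide)
    thus ?thesis by (simp only: mult.assoc)
  next
    case False
    hence "\<beta> - l \<ge> \<beta>" "\<alpha> - l \<ge> \<alpha>" by auto
    hence "(\<beta> - l) * (\<alpha> - l) \<ge> \<beta> * \<alpha>" using assms by (intro mult_mono) auto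
    hence "(s + t)\<^sup>2 \<le> 4 * ((\<beta> - l) * (\<alpha> - l))" using assms(5) by (simp add: power_divide mult.commute)
    thus ?thesis by (simp only: mult.assoc)
  qed
  have "(\<beta> - l) * X\<^sup>2 + (\<alpha> - l) * Y\<^sup>2 - (s + t) * X * Y \<ge> 0"
  proof (cases "\<beta> - l > 0")
    case True
    show ?thesis using quad_nonneg[OF True _ key] l1 assms
      by (simp add: mult.assoc)
  next
    case False thus ?thesis using l1 assms by auto
  qed
  thus ?thesis unfolding l_def[symmetric] by (simp add: algebra_simps)
qed

lemma Im_ik: "Im (\<i> * complex_of_real k * c) = k * Re c" by simp

lemma coercive:
  fixes k \<alpha> \<beta> s t :: real and E Mi X Z :: M3 and a b :: C3
  assumes k: "k > 0" and ab: "\<alpha> > 0" "\<beta> > 0" and st: "((s + t) / 2)\<^sup>2 < \<alpha> * \<beta>"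
    and fs: "frob (Mi ** X) \<le> s" and ft: "frob (Mi ** Z) \<le> t"
    and sX: "symmetric_mat X" and sMi: "symmetric_mat Mi"
    and hb: "- Im (cdot (Mi *v b) (vcnj b)) \<ge> \<alpha> * (norm b)^2"
    and ha: "Im (cdot ((E - X ** Mi ** Z) *v a) (vcnj a)) \<ge> \<beta> * (norm a)^2"
  shows "Im (cdot (complex_of_real (k^2) *s (((E - mat 1) - X ** Mi ** Z) *v a)
                     - (\<i> * complex_of_real k) *s ((X ** Mi) *v b)) (vcnj a)
           + cdot ((\<i> * complex_of_real k) *s ((Mi ** Z) *v a) + (mat 1 - Mi) *v b) (vcnj b))
         \<ge> lamc \<alpha> \<beta> s t * min (k^2) 1 * ((norm a)^2 + (norm b)^2)"
proof -
  have s0: "s \<ge> 0" using fs frob_norm[of "Mi ** X"] norm_ge_zero[of "Mi ** X"] by linarith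
  have t0: "t \<ge> 0" using ft frob_norm[of "Mi ** Z"] norm_ge_zero[of "Mi ** Z"] by linarith
  define c1 where "c1 = cdot ((X ** Mi) *v b) (vcnj a)"
  define c2 where "c2 = cdot ((Mi ** Z) *v a) (vcnj b)"
  have tr: "transpose (X ** Mi) = Mi ** X"
    using sX sMi unfolding symmetric_mat_def by (simp add: matrix_transpose_mul)
  have "cmod c1 = cmod (cdot b ((Mi ** X) *v vcnj a))" unfolding c1_def cdot_transpose tr ..
  also have "\<dots> \<le> norm b * norm ((Mi ** X) *v vcnj a)" by (rule cdot_bound)
  also have "\<dots> \<le> norm b * (s * norm a)"
  proof (rule mult_left_mono)
    have "norm (Mi ** X) * norm a \<le> s * norm a" using fs frob_norm[of "Mi ** X"] by (intro mult_right_mono) auto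
    thus "norm ((Mi ** X) *v vcnj a) \<le> s * norm a" using norm_mat_vec[of "Mi ** X" "vcnj a"] by simp
  qed simp
  finally have c1b: "cmod c1 \<le> s * norm a * norm b" by (simp add: mult_ac)
  have "cmod c2 \<le> norm ((Mi ** Z) *v a) * norm b" unfolding c2_def using cdot_bound[of _ "vcnj b"] by simp
  also have "\<dots> \<le> (t * norm a) * norm b"
  proof (rule mult_right_mono)
    have "norm (Mi ** Z) * norm a \<le> t * norm a" using ft frob_norm[of "Mi ** Z"] by (intro mult_right_mono) auto
    thus "norm ((Mi ** Z) *v a) \<le> t * norm a" using norm_mat_vec[of "Mi ** Z" a] by simp
  qed simp
  finally have c2b: "cmod c2 \<le> t * norm a * norm b" .
  have e1: "((E - mat 1) - X ** Mi ** Z) *v a = (E - X ** Mi ** Z) *v a - a"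
    by (simp add: matrix_vector_mult_diff_rdistrib algebra_simps)
  have e2: "(mat 1 - Mi) *v b = b - Mi *v b" by (simp add: matrix_vector_mult_diff_rdistrib)
  have "Im (cdot a (vcnj a)) = 0" "Im (cdot b (vcnj b)) = 0" by (simp_all add: cdot_self)
  hence LHS: "Im (cdot (complex_of_real (k^2) *s (((E - mat 1) - X ** Mi ** Z) *v a)
                     - (\<i> * complex_of_real k) *s ((X ** Mi) *v b)) (vcnj a)
           + cdot ((\<i> * complex_of_real k) *s ((Mi ** Z) *v a) + (mat 1 - Mi) *v b) (vcnj b))
       = k^2 * Im (cdot ((E - X ** Mi ** Z) *v a) (vcnj a)) - k * Re c1 + k * Re c2
         - Im (cdot (Mi *v b) (vcnj b))"
    unfolding e1 e2 c1_def c2_def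
    by (simp add: cdot_diff_left cdot_add_left cdot_scale_left Im_ik)
  have "Re c1 \<le> s * norm a * norm b" using c1b abs_Re_le_cmod[of c1] by linarith
  hence r1: "- k * Re c1 \<ge> - k * (s * norm a * norm b)" using k by (simp add: mult_left_mono)
  have "- Re c2 \<le> t * norm a * norm b" using c2b abs_Re_le_cmod[of c2] by linarith
  hence "k * (- Re c2) \<le> k * (t * norm a * norm b)" using mult_left_mono[of "- Re c2" "t * norm a * norm b" k] k by linarith
  hence r2: "k * Re c2 \<ge> - k * (t * norm a * norm b)" by simp
  have "k^2 * Im (cdot ((E - X ** Mi ** Z) *v a) (vcnj a)) \<ge> k^2 * (\<beta> * (norm a)^2)"
    using ha by (simp add: mult_left_mono)
  hence main: "Im (cdot (complex_of_real (k^2) *s (((E - mat 1) - X ** Mi ** Z) *v a)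
                     - (\<i> * complex_of_real k) *s ((X ** Mi) *v b)) (vcnj a)
           + cdot ((\<i> * complex_of_real k) *s ((Mi ** Z) *v a) + (mat 1 - Mi) *v b) (vcnj b))
      \<ge> \<beta> * (k * norm a)^2 + \<alpha> * (norm b)^2 - (s + t) * (k * norm a) * norm b"
    unfolding LHS using r1 r2 hb by (simp add: power_mult_distrib algebra_simps)
  have q: "\<beta> * (k * norm a)^2 + \<alpha> * (norm b)^2 - (s + t) * (k * norm a) * norm b
       \<ge> lamc \<alpha> \<beta> s t * ((k * norm a)^2 + (norm b)^2)"
    by (rule quad_lam[OF ab s0 t0 st])
  have lp: "lamc \<alpha> \<beta> s t > 0" unfolding lamc_def using ab st by auto
  have "(k * norm a)^2 + (norm b)^2 \<ge> min (k^2) 1 * ((norm a)^2 + (norm b)^2)"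
  proof -
    have "min (k^2) 1 * (norm a)^2 \<le> (k * norm a)^2" by (simp add: power_mult_distrib mult_right_mono)
    moreover have "min (k^2) 1 * (norm b)^2 \<le> (norm b)^2" by (rule mult_left_le_one_le) auto
    ultimately show ?thesis by (simp add: distrib_left)
  qed
  hence "lamc \<alpha> \<beta> s t * ((k * norm a)^2 + (norm b)^2) \<ge> lamc \<alpha> \<beta> s t * (min (k^2) 1 * ((norm a)^2 + (norm b)^2))"
    using lp by (intro mult_left_mono) auto
  with main q show ?thesis by (simp add: mult.assoc)
qed

lemma quad_remainder_deriv:
  fixes f :: "'a::real_normed_vector \<Rightarrow> 'b::real_normed_vector"
  assumes D: "bounded_linear D" and b: "\<And>y. norm (f y - f x - D (y - x)) \<le> K * (norm (y - x))\<^sup>2"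
  shows "(f has_derivative D) (at x)"
  unfolding has_derivative_iff_norm
proof (intro conjI D)
  have "((\<lambda>y. K * norm (y - x)) \<longlongrightarrow> K * norm (x - x)) (at x)"
    by (intro tendsto_intros)
  hence t: "((\<lambda>y. \<bar>K\<bar> * norm (y - x)) \<longlongrightarrow> 0) (at x)"
    by (intro tendsto_eq_intros) auto
  show "((\<lambda>y. norm (f y - f x - D (y - x)) / norm (y - x)) \<longlongrightarrow> 0) (at x)"
  proof (rule Lim_null_comparison[OF _ t])
    show "\<forall>\<^sub>F y in at x. norm (norm (f y - f x - D (y - x)) / norm (y - x)) \<le> \<bar>K\<bar> * norm (y - x)"
    proof (rule always_eventually, rule allI)
      fix y
      show "norm (norm (f y - f x - D (y - x)) / norm (y - x)) \<le> \<bar>K\<bar> * norm (y - x)"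
      proof (cases "y = x")
        case False
        hence p: "norm (y - x) > 0" by simp
        have "norm (f y - f x - D (y - x)) \<le> \<bar>K\<bar> * norm (y - x) * norm (y - x)"
          using b[of y] by (smt (verit) mult_right_mono norm_ge_zero power2_eq_square mult.assoc abs_ge_self)
        thus ?thesis using p by (simp add: divide_le_eq)
      qed simp
    qed
  qed
qed

definition mm :: "real \<Rightarrow> real" where "mm t = (max 0 t)\<^sup>2"

lemma mm_deriv: "(mm has_real_derivative (2 * max 0 t)) (at t)"
proof -
  have "(mm has_derivative (\<lambda>h. h * (2 * max 0 t))) (at t)"
  proof (rule quad_remainder_deriv[where K=1])
    show "bounded_linear (\<lambda>h. h * (2 * max 0 t))" by (rule bounded_linear_mult_left)
    fix y
    show "norm (mm y - mm t - (y - t) * (2 * max 0 t)) \<le> 1 * (norm (y - t))\<^sup>2"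
      unfolding mm_def real_norm_def
    proof (cases "t \<ge> 0"; cases "y \<ge> 0")
      assume "t \<ge> 0" "y \<ge> 0"
      hence "(max 0 y)\<^sup>2 - (max 0 t)\<^sup>2 - (y - t) * (2 * max 0 t) = (y - t)\<^sup>2"
        by (simp add: max_def power2_eq_square algebra_simps)
      thus "\<bar>(max 0 y)\<^sup>2 - (max 0 t)\<^sup>2 - (y - t) * (2 * max 0 t)\<bar> \<le> 1 * \<bar>y - t\<bar>\<^sup>2"
        by simp
    next
      assume a: "t \<ge> 0" "\<not> y \<ge> 0"
      hence e: "(max 0 y)\<^sup>2 - (max 0 t)\<^sup>2 - (y - t) * (2 * max 0 t) = t * t - 2 * t * y"
        by (simp add: max_def power2_eq_square algebra_simps)
      have "t * y \<le> 0" using a by (simp add: mult_nonneg_nonpos)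
      hence "t * t - 2 * t * y \<ge> 0" using mult_nonneg_nonneg[of t t] a by linarith
      hence "\<bar>(max 0 y)\<^sup>2 - (max 0 t)\<^sup>2 - (y - t) * (2 * max 0 t)\<bar> = t * t - 2 * t * y"
        unfolding e by simp
      also have "\<dots> \<le> 1 * \<bar>y - t\<bar>\<^sup>2" by (simp add: power2_eq_square algebra_simps)
      finally show "\<bar>(max 0 y)\<^sup>2 - (max 0 t)\<^sup>2 - (y - t) * (2 * max 0 t)\<bar> \<le> 1 * \<bar>y - t\<bar>\<^sup>2" .
    next
      assume a: "\<not> t \<ge> 0" "y \<ge> 0"
      hence "\<bar>(max 0 y)\<^sup>2 - (max 0 t)\<^sup>2 - (y - t) * (2 * max 0 t)\<bar> = y * y" by (simp add: power2_eq_square max_def)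
      also have "\<dots> \<le> (y - t) * (y - t)" using a by (intro mult_mono) auto
      finally show "\<bar>(max 0 y)\<^sup>2 - (max 0 t)\<^sup>2 - (y - t) * (2 * max 0 t)\<bar> \<le> 1 * \<bar>y - t\<bar>\<^sup>2"
        by (simp add: power2_eq_square)
    next
      assume a: "\<not> t \<ge> 0" "\<not> y \<ge> 0"
      thus "\<bar>(max 0 y)\<^sup>2 - (max 0 t)\<^sup>2 - (y - t) * (2 * max 0 t)\<bar> \<le> 1 * \<bar>y - t\<bar>\<^sup>2" by (simp add: max_def)
    qed
  qed
  thus ?thesis unfolding has_field_derivative_def by (rule has_derivative_eq_rhs) (simp add: fun_eq_iff mult.commute)
qed

lemma max0_neg: "x \<le> 0 \<Longrightarrow> max 0 x = (0::real)" by simp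
lemma max0_pos: "x \<ge> 0 \<Longrightarrow> max 0 x = (x::real)" by simp

definition kk :: "real \<Rightarrow> real" where "kk R = 1 / (2 * (3/2 * R\<^sup>2)\<^sup>2)"
definition etaq :: "real \<Rightarrow> real \<Rightarrow> real" where
  "etaq R t = 1 - (mm (t - R\<^sup>2) - 2 * mm (t - 5/2 * R\<^sup>2) + mm (t - 4 * R\<^sup>2)) * kk R"
definition etaq' :: "real \<Rightarrow> real \<Rightarrow> real" where
  "etaq' R t = - (2 * max 0 (t - R\<^sup>2) - 4 * max 0 (t - 5/2 * R\<^sup>2) + 2 * max 0 (t - 4 * R\<^sup>2)) * kk R"

lemma etaq_deriv: "(etaq R has_real_derivative etaq' R t) (at t)"
  unfolding etaq_def etaq'_def
  by (auto intro!: derivative_eq_intros DERIV_chain2[OF mm_deriv] simp: algebra_simps)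

lemma etaq'_cont: "continuous_on UNIV (etaq' R)"
  unfolding etaq'_def by (intro continuous_intros)

lemma etaq_small: "t \<le> R\<^sup>2 \<Longrightarrow> etaq R t = 1 \<and> etaq' R t = 0"
proof -
  assume t: "t \<le> R\<^sup>2"
  have r: "R\<^sup>2 \<ge> 0" by simp
  have "max 0 (t - R\<^sup>2) = 0" "max 0 (t - 5/2 * R\<^sup>2) = 0" "max 0 (t - 4 * R\<^sup>2) = 0"
    by (rule max0_neg, use t r in linarith)+
  thus ?thesis unfolding etaq_def etaq'_def mm_def by simp
qed

lemma etaq_large: "R \<noteq> 0 \<Longrightarrow> t \<ge> 4 * R\<^sup>2 \<Longrightarrow> etaq R t = 0 \<and> etaq' R t = 0"
proof -
  assume R: "R \<noteq> 0" and t: "t \<ge> 4 * R\<^sup>2"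
  have r: "R\<^sup>2 \<ge> 0" by simp
  have m: "max 0 (t - R\<^sup>2) = t - R\<^sup>2" "max 0 (t - 5/2 * R\<^sup>2) = t - 5/2 * R\<^sup>2" "max 0 (t - 4 * R\<^sup>2) = t - 4 * R\<^sup>2"
    by (rule max0_pos, use t r in linarith)+
  have "(mm (t - R\<^sup>2) - 2 * mm (t - 5/2 * R\<^sup>2) + mm (t - 4 * R\<^sup>2)) = 2 * (3/2 * R\<^sup>2)\<^sup>2"
    unfolding mm_def m by (simp add: power2_eq_square algebra_simps)
  moreover have "2 * (3/2 * R\<^sup>2)\<^sup>2 \<noteq> 0" using R by simp
  ultimately have A: "etaq R t = 0" unfolding etaq_def kk_def by simp
  have "etaq' R t = - (2 * (t - R\<^sup>2) - 4 * (t - 5/2 * R\<^sup>2) + 2 * (t - 4 * R\<^sup>2)) * kk R"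
    by (simp only: etaq'_def m)
  moreover have "2 * (t - R\<^sup>2) - 4 * (t - 5/2 * R\<^sup>2) + 2 * (t - 4 * R\<^sup>2) = 0" by (simp add: algebra_simps)
  ultimately have "etaq' R t = 0" by simp
  with A show ?thesis by simp
qed

lemma qaux: "(r::real) > 0 \<Longrightarrow> 0 \<le> 2 * max 0 (t - r) - 4 * max 0 (t - 5/2 * r) + 2 * max 0 (t - 4 * r)
   \<and> 2 * max 0 (t - r) - 4 * max 0 (t - 5/2 * r) + 2 * max 0 (t - 4 * r) \<le> 2 * (3/2 * r)"
  by (auto simp: max_def)

lemma etaq'_bounds:
  assumes "R > 0"
  shows "etaq' R t \<le> 0 \<and> etaq' R t \<ge> - 1 / (3/2 * R\<^sup>2)"
proof -
  define q where "q = 2 * max 0 (t - R\<^sup>2) - 4 * max 0 (t - 5/2 * R\<^sup>2) + 2 * max 0 (t - 4 * R\<^sup>2)"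
  have R2: "R\<^sup>2 > 0" using assms by simp
  have q0: "q \<ge> 0" and q1: "q \<le> 2 * (3/2 * R\<^sup>2)" using qaux[OF R2, of t] unfolding q_def by auto
  have e: "etaq' R t = - q / (2 * (3/2 * R\<^sup>2)\<^sup>2)" unfolding etaq'_def q_def kk_def by simp
  have "q / (2 * (3/2 * R\<^sup>2)\<^sup>2) \<le> 2 * (3/2 * R\<^sup>2) / (2 * (3/2 * R\<^sup>2)\<^sup>2)"
    using q1 R2 by (intro divide_right_mono) auto
  also have "\<dots> = 1 / (3/2 * R\<^sup>2)" using R2 by (simp add: power2_eq_square)
  finally show ?thesis unfolding e using q0 R2 by (auto simp: divide_nonneg_pos)
qed

definition chi :: "real \<Rightarrow> R3 \<Rightarrow> real" where "chi R x = etaq R (x \<bullet> x)"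
definition gradchi :: "real \<Rightarrow> R3 \<Rightarrow> R3" where "gradchi R x = (2 * etaq' R (x \<bullet> x)) *\<^sub>R x"

lemma chi_deriv: "(chi R has_derivative (\<lambda>v. gradchi R x \<bullet> v)) (at x)"
proof -
  have d1: "((\<lambda>x. x \<bullet> x) has_derivative (\<lambda>v. x \<bullet> v + v \<bullet> x)) (at x)"
    by (rule has_derivative_inner[OF has_derivative_ident has_derivative_ident])
  have d2: "(etaq R has_derivative (\<lambda>h. etaq' R (x \<bullet> x) * h)) (at (x \<bullet> x))"
    using etaq_deriv[of R "x \<bullet> x"] by (simp add: has_field_derivative_def)
  have "((\<lambda>x. etaq R (x \<bullet> x)) has_derivative (\<lambda>v. etaq' R (x \<bullet> x) * (x \<bullet> v + v \<bullet> x))) (at x)"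
    using has_derivative_compose[OF d1 d2] by (simp add: o_def)
  moreover have "(\<lambda>v. etaq' R (x \<bullet> x) * (x \<bullet> v + v \<bullet> x)) = (\<lambda>v. gradchi R x \<bullet> v)"
    unfolding gradchi_def by (auto simp: inner_commute algebra_simps)
  ultimately show ?thesis unfolding chi_def by simp
qed

lemma chi_cont: "continuous_on UNIV (chi R)"
  using chi_deriv by (meson continuous_at_imp_continuous_on has_derivative_continuous)

lemma gradchi_cont: "continuous_on UNIV (gradchi R)"
  unfolding gradchi_def
  by (intro continuous_intros continuous_on_compose2[OF etaq'_cont]) auto

lemma chi_inner: "R > 0 \<Longrightarrow> norm x \<le> R \<Longrightarrow> chi R x = 1 \<and> gradchi R x = 0"
  unfolding chi_def gradchi_def using etaq_small[of "x \<bullet> x" R]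
  by (simp add: power2_norm_eq_inner[symmetric] power_mono)

lemma chi_outer: "R > 0 \<Longrightarrow> norm x \<ge> 2 * R \<Longrightarrow> chi R x = 0 \<and> gradchi R x = 0"
proof -
  assume R: "R > 0" "norm x \<ge> 2 * R"
  have "(2 * R)\<^sup>2 \<le> (norm x)\<^sup>2" using R by (intro power_mono) auto
  hence "x \<bullet> x \<ge> 4 * R\<^sup>2" by (simp add: power2_norm_eq_inner power_mult_distrib)
  thus ?thesis unfolding chi_def gradchi_def using etaq_large[of R "x \<bullet> x"] R by simp
qed

lemma gradchi_radial:
  assumes R: "R > 0"
  shows "\<exists>c. c \<le> 0 \<and> \<bar>c\<bar> \<le> 4 / R \<and> gradchi R x = c *\<^sub>R (x /\<^sub>R norm x)"
proof (cases "norm x < 2 * R")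
  case False thus ?thesis using chi_outer[OF R, of x] R by (intro exI[of _ 0]) auto
next
  case True
  define e where "e = etaq' R (x \<bullet> x)"
  have eb: "e \<le> 0" "e \<ge> - 1 / (3/2 * R\<^sup>2)" using etaq'_bounds[OF R] unfolding e_def by auto
  show ?thesis
  proof (cases "x = 0")
    case True thus ?thesis unfolding gradchi_def using R by (intro exI[of _ 0]) auto
  next
    case False
    have "gradchi R x = (2 * e * norm x) *\<^sub>R (x /\<^sub>R norm x)" unfolding gradchi_def e_def using False by simp
    moreover have "2 * e * norm x \<le> 0" using eb by (simp add: mult_nonpos_nonneg)
    moreover have "\<bar>2 * e * norm x\<bar> \<le> 4 / R"
    proof -
      have "\<bar>2 * e * norm x\<bar> = 2 * (- e) * norm x" using eb by (simp add: abs_mult)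
      also have "\<dots> \<le> 2 * (1 / (3/2 * R\<^sup>2)) * (2 * R)" using eb True
        by (intro mult_mono) auto
      also have "\<dots> \<le> 4 / R" using R by (simp add: power2_eq_square field_simps)
      finally show ?thesis .
    qed
    ultimately show ?thesis by blast
  qed
qed

lemma cont_meas: "continuous_on UNIV f \<Longrightarrow> f \<in> borel_measurable lebesgue"
  using continuous_imp_measurable_on_sets_lebesgue[of UNIV f] by (simp add: lebesgue_on_UNIV_eq)

lemma cont_cdot: "continuous_on UNIV (\<lambda>p::C3\<times>C3. cdot (fst p) (snd p))"
  unfolding cdot_def by (intro continuous_intros)
lemma cont_vcnj: "continuous_on UNIV vcnj"
  unfolding vcnj_def by (intro continuous_intros)
lemma cont_mv: "continuous_on UNIV (\<lambda>p::M3\<times>C3. fst p *v snd p)"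
  unfolding matrix_vector_mult_def by (intro continuous_intros)
lemma cont_mm: "continuous_on UNIV (\<lambda>p::M3\<times>M3. fst p ** snd p)"
  unfolding matrix_matrix_mult_def by (intro continuous_intros)

lemma meas_cdot[measurable (raw)]:
  "f \<in> borel_measurable M \<Longrightarrow> g \<in> borel_measurable M \<Longrightarrow> (\<lambda>x. cdot (f x) (g x)) \<in> borel_measurable M"
  by (rule borel_measurable_continuous_Pair[OF _ _ cont_cdot[unfolded split_beta']]) auto
lemma meas_vcnj[measurable (raw)]:
  "f \<in> borel_measurable M \<Longrightarrow> (\<lambda>x. vcnj (f x)) \<in> borel_measurable M"
  using measurable_compose[OF _ borel_measurable_continuous_onI[OF cont_vcnj]] by blast
lemma meas_mv[measurable (raw)]:
  "f \<in> borel_measurable M \<Longrightarrow> g \<in> borel_measurable M \<Longrightarrow> (\<lambda>x. (f x :: M3) *v (g x :: C3)) \<in> borel_measurable M"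
  by (rule borel_measurable_continuous_Pair[OF _ _ cont_mv[unfolded split_beta']]) auto
lemma meas_mm[measurable (raw)]:
  "f \<in> borel_measurable M \<Longrightarrow> g \<in> borel_measurable M \<Longrightarrow> (\<lambda>x. (f x :: M3) ** (g x :: M3)) \<in> borel_measurable M"
  by (rule borel_measurable_continuous_Pair[OF _ _ cont_mm[unfolded split_beta']]) auto

lemma ind_sq: "indicator S x * indicator S x = (indicator S x :: real)"
  by (simp add: indicator_def)

lemma norm_ind_sq: "(norm (indicator S x *\<^sub>R (F x :: 'a::real_normed_vector)))\<^sup>2 = indicator S x * (norm (F x))\<^sup>2"
  by (simp add: indicator_def)

lemma L2on_iff: "L2on S F \<longleftrightarrow> (\<lambda>x. indicator S x *\<^sub>R F x) \<in> borel_measurable lebesgue \<and>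
     integrable lebesgue (\<lambda>x. (norm (indicator S x *\<^sub>R F x))\<^sup>2)"
proof -
  have e: "(\<integral>\<^sup>+ x. ennreal (norm ((norm (indicator S x *\<^sub>R F x))\<^sup>2)) \<partial>lebesgue)
        = (\<integral>\<^sup>+ x. ennreal (indicator S x * (norm (F x))^2) \<partial>lebesgue)"
    by (intro nn_integral_cong) (simp add: indicator_def)
  have mm: "(\<lambda>x. indicator S x *\<^sub>R F x) \<in> borel_measurable lebesgue \<Longrightarrow>
     (\<lambda>x. (norm (indicator S x *\<^sub>R F x))\<^sup>2) \<in> borel_measurable lebesgue"
    by (erule measurable_compose[OF _ borel_measurable_continuous_onI[of "\<lambda>v. (norm v)\<^sup>2"]])
       (intro continuous_intros)
  show ?thesis unfolding L2on_def integrable_iff_bounded e using mm by blast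
qed

lemma scale_mv: "(r *\<^sub>R (A::M3)) *v (r *\<^sub>R v) = (r * r) *\<^sub>R (A *v v)"
  by (simp add: vec_eq_iff matrix_vector_mult_def scaleR_sum_right)

lemma ind_scale_mv: "indicator S x *\<^sub>R ((A::M3) *v v) = (indicator S x *\<^sub>R A) *v (indicator S x *\<^sub>R v)"
  by (simp add: scale_mv ind_sq)

lemma L2on_add:
  assumes "L2on S F" "L2on S G"
  shows "L2on S (\<lambda>x. F x + G x)"
proof -
  from assms have m: "(\<lambda>x. indicator S x *\<^sub>R F x) \<in> borel_measurable lebesgue"
    "(\<lambda>x. indicator S x *\<^sub>R G x) \<in> borel_measurable lebesgue"
    and i: "integrable lebesgue (\<lambda>x. (norm (indicator S x *\<^sub>R F x))\<^sup>2)"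
    "integrable lebesgue (\<lambda>x. (norm (indicator S x *\<^sub>R G x))\<^sup>2)" unfolding L2on_iff by auto
  have e: "(\<lambda>x. indicator S x *\<^sub>R (F x + G x)) = (\<lambda>x. indicator S x *\<^sub>R F x + indicator S x *\<^sub>R G x)"
    by (simp add: scaleR_add_right)
  have m2: "(\<lambda>x. indicator S x *\<^sub>R (F x + G x)) \<in> borel_measurable lebesgue" unfolding e using m by simp
  have "integrable lebesgue (\<lambda>x. (norm (indicator S x *\<^sub>R (F x + G x)))\<^sup>2)"
  proof (rule Bochner_Integration.integrable_bound)
    show "integrable lebesgue (\<lambda>x. 2 * (norm (indicator S x *\<^sub>R F x))\<^sup>2 + 2 * (norm (indicator S x *\<^sub>R G x))\<^sup>2)"
      using i by auto
    show "(\<lambda>x. (norm (indicator S x *\<^sub>R (F x + G x)))\<^sup>2) \<in> borel_measurable lebesgue" using m2 by measurable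
    show "AE x in lebesgue. norm ((norm (indicator S x *\<^sub>R (F x + G x)))\<^sup>2)
          \<le> norm (2 * (norm (indicator S x *\<^sub>R F x))\<^sup>2 + 2 * (norm (indicator S x *\<^sub>R G x))\<^sup>2)"
    proof (rule AE_I2)
      fix x
      define a where "a = norm (indicator S x *\<^sub>R F x)"
      define b where "b = norm (indicator S x *\<^sub>R G x)"
      have "norm (indicator S x *\<^sub>R (F x + G x)) \<le> a + b" unfolding a_def b_def e
        by (metis norm_triangle_ineq scaleR_add_right)
      hence "(norm (indicator S x *\<^sub>R (F x + G x)))\<^sup>2 \<le> (a + b)\<^sup>2" by (intro power_mono) auto
      also have "\<dots> \<le> 2 * a\<^sup>2 + 2 * b\<^sup>2" using sum_squares_ge_zero[of a b] 
        by (smt (verit) power2_eq_square zero_le_square[of "a - b"] left_diff_distrib right_diff_distrib)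
      finally show "norm ((norm (indicator S x *\<^sub>R (F x + G x)))\<^sup>2)
          \<le> norm (2 * (norm (indicator S x *\<^sub>R F x))\<^sup>2 + 2 * (norm (indicator S x *\<^sub>R G x))\<^sup>2)"
        unfolding a_def b_def by simp
    qed
  qed
  thus ?thesis unfolding L2on_iff using m2 by simp
qed

lemma L2on_mat:
  assumes F: "L2on S F" and Mm: "(\<lambda>x. indicator S x *\<^sub>R M x) \<in> borel_measurable lebesgue"
    and Mb: "AE x in lebesgue. x \<in> S \<longrightarrow> norm (M x) \<le> B"
  shows "L2on S (\<lambda>x. (M x :: M3) *v F x)"
proof -
  from F have m: "(\<lambda>x. indicator S x *\<^sub>R F x) \<in> borel_measurable lebesgue"
    and i: "integrable lebesgue (\<lambda>x. (norm (indicator S x *\<^sub>R F x))\<^sup>2)" unfolding L2on_iff by auto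
  have m2: "(\<lambda>x. indicator S x *\<^sub>R (M x *v F x)) \<in> borel_measurable lebesgue"
    unfolding ind_scale_mv using m Mm by measurable
  have "integrable lebesgue (\<lambda>x. (norm (indicator S x *\<^sub>R (M x *v F x)))\<^sup>2)"
  proof (rule Bochner_Integration.integrable_bound)
    show "integrable lebesgue (\<lambda>x. B\<^sup>2 * (norm (indicator S x *\<^sub>R F x))\<^sup>2)" using i by auto
    show "(\<lambda>x. (norm (indicator S x *\<^sub>R (M x *v F x)))\<^sup>2) \<in> borel_measurable lebesgue" using m2 by measurable
    show "AE x in lebesgue. norm ((norm (indicator S x *\<^sub>R (M x *v F x)))\<^sup>2)
          \<le> norm (B\<^sup>2 * (norm (indicator S x *\<^sub>R F x))\<^sup>2)"
      using Mb
    proof (rule AE_mp, intro AE_I2 impI)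
      fix x assume b: "x \<in> S \<longrightarrow> norm (M x) \<le> B"
      show "norm ((norm (indicator S x *\<^sub>R (M x *v F x)))\<^sup>2) \<le> norm (B\<^sup>2 * (norm (indicator S x *\<^sub>R F x))\<^sup>2)"
      proof (cases "x \<in> S")
        case True
        have "norm (M x *v F x) \<le> B * norm (F x)"
          using norm_mat_vec[of "M x" "F x"] b True by (meson mult_right_mono norm_ge_zero order_trans)
        hence "(norm (M x *v F x))\<^sup>2 \<le> (B * norm (F x))\<^sup>2" by (intro power_mono) auto
        thus ?thesis using True by (simp add: power_mult_distrib)
      qed simp
    qed
  qed
  thus ?thesis unfolding L2on_iff using m2 by simp
qed

lemma cdot_3: "cdot a b = a$1 * b$1 + a$2 * b$2 + a$3 * b$3"
  unfolding cdot_def sum_3 ..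

lemma vec3_eq: "(x::'a^3) = y \<longleftrightarrow> x$1 = y$1 \<and> x$2 = y$2 \<and> x$3 = y$3"
  by (simp add: vec_eq_iff forall_3)

lemma triple_swap: "cdot (ccross g u) p = - cdot u (ccross g p)"
  unfolding cdot_3 ccross_def by (simp add: ring_distribs)

lemma vector3_chi: "(vector [a, b, c] :: 'a::zero^3) = (\<chi> i. if i = 1 then a else if i = 2 then b else c)"
  unfolding vec3_eq by simp

lemma cont_vector3:
  "continuous_on S a \<Longrightarrow> continuous_on S b \<Longrightarrow> continuous_on S c \<Longrightarrow>
   continuous_on S (\<lambda>x. vector [a x, b x, c x] :: 'a::real_normed_vector^3)"
  unfolding vector3_chi
  apply (rule continuous_on_vec_lambda)
  subgoal for i by (cases "i = 1"; cases "i = 2") auto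
  done

definition crossmat :: "R3 \<Rightarrow> M3" where
  "crossmat g = vector [vector [0, - complex_of_real (g$3), complex_of_real (g$2)],
                        vector [complex_of_real (g$3), 0, - complex_of_real (g$1)],
                        vector [- complex_of_real (g$2), complex_of_real (g$1), 0]]"

lemma crossmat_mv: "crossmat g *v b = ccross (cvec g) b"
  unfolding vec3_eq crossmat_def matrix_vector_mult_def ccross_def cvec_def
  by (simp add: sum_3)

lemma cont_crossmat: "continuous_on UNIV g \<Longrightarrow> continuous_on UNIV (\<lambda>x. crossmat (g x))"
  unfolding crossmat_def by (intro cont_vector3 continuous_intros)

lemma cont_bounded_supp:
  fixes \<psi> :: "R3 \<Rightarrow> 'a::real_normed_vector"
  assumes c: "continuous_on UNIV \<psi>" and s: "\<forall>x. norm x \<ge> r \<longrightarrow> \<psi> x = 0"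
  shows "\<exists>B. \<forall>x. norm (\<psi> x) \<le> B"
proof -
  have "compact (\<psi> ` cball 0 r)" by (rule compact_continuous_image[OF continuous_on_subset[OF c]]) auto
  then obtain B where B: "\<forall>y\<in>\<psi> ` cball 0 r. norm y \<le> B" using compact_imp_bounded bounded_iff by metis
  have "norm (\<psi> x) \<le> max B 0" for x
  proof (cases "norm x \<le> r")
    case True
    hence "\<psi> x \<in> \<psi> ` cball 0 r" by auto
    hence "norm (\<psi> x) \<le> B" using B by blast
    thus ?thesis by simp
  next
    case False thus ?thesis using s by simp
  qed
  thus ?thesis by blast
qed

lemma ball_sets: "ball (0::R3) r \<in> sets lebesgue"
  using lmeasurable_ball fmeasurableD by blast

lemma L2on_subset:
  assumes F: "L2on T F" and ST: "S \<subseteq> T" and S: "S \<in> sets lebesgue"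
  shows "L2on S F"
proof -
  from F have m: "(\<lambda>x. indicator T x *\<^sub>R F x) \<in> borel_measurable lebesgue"
    and i: "(\<integral>\<^sup>+ x. ennreal (indicator T x * (norm (F x))^2) \<partial>lebesgue) < \<infinity>" unfolding L2on_def by auto
  have e: "(\<lambda>x. indicator S x *\<^sub>R F x) = (\<lambda>x. indicator S x *\<^sub>R (indicator T x *\<^sub>R F x))"
    using ST by (auto simp: indicator_def fun_eq_iff)
  have "(\<lambda>x. indicator S x *\<^sub>R F x) \<in> borel_measurable lebesgue" unfolding e using m S by measurable
  moreover have "(\<integral>\<^sup>+ x. ennreal (indicator S x * (norm (F x))^2) \<partial>lebesgue)
      \<le> (\<integral>\<^sup>+ x. ennreal (indicator T x * (norm (F x))^2) \<partial>lebesgue)"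
    using ST by (intro nn_integral_mono) (auto simp: indicator_def)
  ultimately show ?thesis unfolding L2on_def using i by (meson order.strict_trans1)
qed

lemma L2on_UNIV_supp:
  assumes F: "L2on (ball 0 r) F" and s: "\<forall>x. norm x \<ge> r \<longrightarrow> F x = 0"
  shows "L2on UNIV F"
proof -
  have e1: "(\<lambda>x. indicator UNIV x *\<^sub>R F x) = (\<lambda>x. indicator (ball 0 r) x *\<^sub>R F x)"
    using s by (auto simp: indicator_def fun_eq_iff)
  have e2: "(\<lambda>x. ennreal (indicator UNIV x * (norm (F x))^2)) = (\<lambda>x. ennreal (indicator (ball 0 r) x * (norm (F x))^2))"
    using s by (auto simp: indicator_def fun_eq_iff)
  show ?thesis using F unfolding L2on_def e1 e2 .
qed

lemma L2loc_mat:
  assumes F: "L2loc F" and c: "continuous_on UNIV M" and b: "\<forall>x. norm (M x) \<le> B"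
  shows "L2loc (\<lambda>x. (M x :: M3) *v F x)"
  unfolding L2loc_def
proof
  fix r
  have "(\<lambda>x. indicator (ball 0 r) x *\<^sub>R M x) \<in> borel_measurable lebesgue"
    by (intro borel_measurable_scaleR borel_measurable_indicator cont_meas[OF c] ball_sets)
  thus "L2on (ball 0 r) (\<lambda>x. M x *v F x)"
    using F b unfolding L2loc_def by (intro L2on_mat[where B=B]) auto
qed

lemma L2loc_add: "L2loc F \<Longrightarrow> L2loc G \<Longrightarrow> L2loc (\<lambda>x. F x + G x)"
  unfolding L2loc_def using L2on_add by blast

lemma integrable_cdot_loc:
  assumes u: "L2loc u" and c: "continuous_on UNIV \<psi>" and s: "\<forall>x. norm x \<ge> r \<longrightarrow> \<psi> x = 0"
  shows "integrable lebesgue (\<lambda>x. cdot (u x) (\<psi> x))"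
proof -
  obtain B where B: "\<forall>x. norm (\<psi> x) \<le> B" using cont_bounded_supp[OF c s] by blast
  define ur where "ur x = indicator (ball 0 r) x *\<^sub>R u x" for x
  have ur: "ur \<in> borel_measurable lebesgue" "integrable lebesgue (\<lambda>x. (norm (ur x))\<^sup>2)"
    using u unfolding L2loc_def L2on_iff ur_def by auto
  have e: "cdot (u x) (\<psi> x) = cdot (ur x) (\<psi> x)" for x
  proof (cases "norm x \<ge> r")
    case True thus ?thesis using s by (simp add: cdot_def)
  next
    case False thus ?thesis by (simp add: ur_def)
  qed
  have ib: "integrable lebesgue (indicator (ball (0::R3) r) :: R3 \<Rightarrow> real)"
  proof -
    have l: "ball (0::R3) r \<in> sets lebesgue" "emeasure lebesgue (ball (0::R3) r) < \<infinity>"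
      using lmeasurable_ball[of "0::R3" r] unfolding fmeasurable_def by blast+
    show ?thesis using integrable_real_indicator[OF l] .
  qed
  show ?thesis unfolding e
  proof (rule Bochner_Integration.integrable_bound)
    show "integrable lebesgue (\<lambda>x. B * (indicator (ball 0 r) x + (norm (ur x))\<^sup>2))"
      using ib ur by auto
    show "(\<lambda>x. cdot (ur x) (\<psi> x)) \<in> borel_measurable lebesgue" using ur cont_meas[OF c] by measurable
    show "AE x in lebesgue. norm (cdot (ur x) (\<psi> x)) \<le> norm (B * (indicator (ball 0 r) x + (norm (ur x))\<^sup>2))"
    proof (rule AE_I2)
      fix x
      have B0: "B \<ge> 0" using B norm_ge_zero order_trans by blast
      have n: "norm (ur x) \<le> indicator (ball 0 r) x + (norm (ur x))\<^sup>2"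
      proof (cases "x \<in> ball 0 r")
        case True
        have "0 \<le> (norm (ur x) - 1)\<^sup>2" by simp
        moreover have "(norm (ur x) - 1)\<^sup>2 = (norm (ur x))\<^sup>2 - 2 * norm (ur x) + 1"
          by (simp add: power2_eq_square algebra_simps)
        ultimately have "norm (ur x) \<le> 1 + (norm (ur x))\<^sup>2" using norm_ge_zero[of "ur x"] by linarith
        thus ?thesis using True by simp
      qed (simp add: ur_def)
      have "norm (ur x) * norm (\<psi> x) \<le> norm (ur x) * B" using B by (simp add: mult_left_mono)
      hence "norm (cdot (ur x) (\<psi> x)) \<le> norm (ur x) * B"
        using cdot_bound[of "ur x" "\<psi> x"] by linarith
      also have "\<dots> \<le> (indicator (ball 0 r) x + (norm (ur x))\<^sup>2) * B" using n B0 by (rule mult_right_mono)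
      finally show "norm (cdot (ur x) (\<psi> x)) \<le> norm (B * (indicator (ball 0 r) x + (norm (ur x))\<^sup>2))"
        using B0 by (simp add: abs_mult mult.commute)
    qed
  qed
qed

lemma scR_comp: "(r *\<^sub>R (v::C3))$i = complex_of_real r * v$i"
  by (simp only: vector_scaleR_component scaleR_conv_of_real[of r "v$i"])
lemma scR_compM: "(r *\<^sub>R (v::M3))$i$j = complex_of_real r * v$i$j"
  by (simp only: vector_scaleR_component scaleR_conv_of_real[of r "v$i$j"])

lemma cdot_scaleR_left: "cdot (r *\<^sub>R a) b = complex_of_real r * cdot a b"
  unfolding cdot_def by (simp add: scR_comp sum_distrib_left mult.assoc del: vector_scaleR_component)
lemma cdot_scaleR_right: "cdot a (r *\<^sub>R b) = complex_of_real r * cdot a b"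
  unfolding cdot_def by (simp add: scR_comp sum_distrib_left mult_ac del: vector_scaleR_component)

lemma pd_chi:
  assumes d: "\<forall>x. \<phi> differentiable (at x)"
  shows "pd (\<lambda>x. chi R x *\<^sub>R \<phi> x) j x = chi R x *\<^sub>R pd \<phi> j x + (gradchi R x $ j) *\<^sub>R \<phi> x"
proof -
  have d\<phi>: "(\<phi> has_derivative frechet_derivative \<phi> (at x)) (at x)"
    using d frechet_derivative_works by blast
  have "((\<lambda>x. chi R x *\<^sub>R \<phi> x) has_derivative
      (\<lambda>h. chi R x *\<^sub>R frechet_derivative \<phi> (at x) h + (gradchi R x \<bullet> h) *\<^sub>R \<phi> x)) (at x)"
    by (rule has_derivative_scaleR[OF chi_deriv d\<phi>])
  hence "(\<lambda>h. chi R x *\<^sub>R frechet_derivative \<phi> (at x) h + (gradchi R x \<bullet> h) *\<^sub>R \<phi> x)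
        = frechet_derivative (\<lambda>x. chi R x *\<^sub>R \<phi> x) (at x)" by (rule frechet_derivative_at)
  from fun_cong[OF this, of "axis j 1"] show ?thesis
    unfolding pd_def by (simp add: inner_axis)
qed

lemma ccurl_chi:
  assumes d: "\<forall>x. \<phi> differentiable (at x)"
  shows "ccurl (\<lambda>x. chi R x *\<^sub>R \<phi> x) x = chi R x *\<^sub>R ccurl \<phi> x + ccross (cvec (gradchi R x)) (\<phi> x)"
  unfolding ccurl_def pd_chi[OF d] vec3_eq
  by (simp add: ccross_def cvec_def scR_comp algebra_simps del: vector_scaleR_component)

lemma cont_ccurl: "(\<forall>j. continuous_on UNIV (pd F j)) \<Longrightarrow> continuous_on UNIV (ccurl F)"
  unfolding ccurl_def by (intro cont_vector3 continuous_intros) auto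

lemma cont_ccross: "continuous_on UNIV g \<Longrightarrow> continuous_on UNIV \<phi> \<Longrightarrow>
   continuous_on UNIV (\<lambda>x. ccross (cvec (g x)) (\<phi> x))"
  unfolding ccross_def cvec_def by (intro cont_vector3 continuous_intros)

lemma test_fun_cont: "test_fun \<phi> \<Longrightarrow> continuous_on UNIV \<phi>"
  unfolding test_fun_def
  by (meson continuous_at_imp_continuous_on differentiable_imp_continuous_within)

lemma test_fun_chi:
  assumes t: "test_fun \<phi>"
  shows "test_fun (\<lambda>x. chi R x *\<^sub>R \<phi> x)"
proof -
  have d: "\<forall>x. \<phi> differentiable (at x)" and pc: "\<forall>j. continuous_on UNIV (pd \<phi> j)"
    and b: "bounded {x. \<phi> x \<noteq> 0}" using t unfolding test_fun_def by auto
  have c\<phi>: "continuous_on UNIV \<phi>" by (rule test_fun_cont[OF t])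
  have "\<forall>x. (\<lambda>x. chi R x *\<^sub>R \<phi> x) differentiable (at x)"
  proof
    fix x
    have "(\<phi> has_derivative frechet_derivative \<phi> (at x)) (at x)"
      using d frechet_derivative_works by blast
    thus "(\<lambda>x. chi R x *\<^sub>R \<phi> x) differentiable (at x)"
      using has_derivative_scaleR[OF chi_deriv] differentiable_def by blast
  qed
  moreover have "\<forall>j. continuous_on UNIV (pd (\<lambda>x. chi R x *\<^sub>R \<phi> x) j)"
  proof
    fix j
    have e: "pd (\<lambda>x. chi R x *\<^sub>R \<phi> x) j = (\<lambda>x. chi R x *\<^sub>R pd \<phi> j x + (gradchi R x $ j) *\<^sub>R \<phi> x)"
      using pd_chi[OF d] by blast
    show "continuous_on UNIV (pd (\<lambda>x. chi R x *\<^sub>R \<phi> x) j)" unfolding e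
      using chi_cont gradchi_cont pc c\<phi> by (intro continuous_intros) auto
  qed
  moreover have "bounded {x. chi R x *\<^sub>R \<phi> x \<noteq> 0}" by (rule bounded_subset[OF b]) auto
  ultimately show ?thesis unfolding test_fun_def by blast
qed

lemma scaleR_mv_left: "(r *\<^sub>R (A::M3)) *v v = r *\<^sub>R (A *v v)"
  by (simp add: vec_eq_iff matrix_vector_mult_def scR_comp scR_compM sum_distrib_left mult.assoc del: vector_scaleR_component)

lemma scaleR_mat1: "((r::real) *\<^sub>R (mat 1 :: M3)) *v v = r *\<^sub>R v"
  by (simp add: scaleR_mv_left)

lemma crossmat0: "crossmat 0 = 0"
  unfolding crossmat_def vec3_eq by simp

lemma chi_supp: "R > 0 \<Longrightarrow> \<forall>x. norm x \<ge> 2 * R \<longrightarrow> chi R x = 0 \<and> gradchi R x = 0"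
  using chi_outer by blast

lemma cutoff_Hcurl:
  assumes R: "R > 0" and H: "Hloc_curl u w"
  shows "Hcurl_cs (\<lambda>x. chi R x *\<^sub>R u x) (\<lambda>x. chi R x *\<^sub>R w x + ccross (cvec (gradchi R x)) (u x))"
proof -
  have uL: "L2loc u" and wL: "L2loc w"
    and weak: "\<And>\<phi>. test_fun \<phi> \<Longrightarrow> (\<integral>x. cdot (u x) (ccurl \<phi> x) \<partial>lebesgue) = (\<integral>x. cdot (w x) (\<phi> x) \<partial>lebesgue)"
    using H unfolding Hloc_curl_def by auto
  define v where "v x = chi R x *\<^sub>R u x" for x
  define cv where "cv x = chi R x *\<^sub>R w x + ccross (cvec (gradchi R x)) (u x)" for x
  have sup: "\<forall>x. norm x \<ge> 2 * R \<longrightarrow> chi R x = 0 \<and> gradchi R x = 0" using chi_supp[OF R] .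
  have cM1: "continuous_on UNIV (\<lambda>x. chi R x *\<^sub>R (mat 1 :: M3))" using chi_cont by (intro continuous_intros) auto
  have cM2: "continuous_on UNIV (\<lambda>x. crossmat (gradchi R x))" by (rule cont_crossmat[OF gradchi_cont])
  have s1: "\<forall>x. norm x \<ge> 2 * R \<longrightarrow> chi R x *\<^sub>R (mat 1 :: M3) = 0" using sup by simp
  have s2: "\<forall>x. norm x \<ge> 2 * R \<longrightarrow> crossmat (gradchi R x) = 0" using sup crossmat0 by simp
  obtain B1 where B1: "\<forall>x. norm (chi R x *\<^sub>R (mat 1 :: M3)) \<le> B1"
    using cont_bounded_supp[OF cM1 s1] by blast
  obtain B2 where B2: "\<forall>x. norm (crossmat (gradchi R x)) \<le> B2"
    using cont_bounded_supp[OF cM2 s2] by blast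
  have ev: "v = (\<lambda>x. (chi R x *\<^sub>R mat 1) *v u x)" unfolding v_def scaleR_mat1 ..
  have ecv: "cv = (\<lambda>x. (chi R x *\<^sub>R mat 1) *v w x + crossmat (gradchi R x) *v u x)"
    unfolding cv_def scaleR_mat1 crossmat_mv ..
  have vL: "L2loc v" unfolding ev by (rule L2loc_mat[OF uL cM1 B1])
  have cvL: "L2loc cv" unfolding ecv by (intro L2loc_add L2loc_mat[OF wL cM1 B1] L2loc_mat[OF uL cM2 B2])
  have vs: "\<forall>x. norm x \<ge> 2 * R \<longrightarrow> v x = 0" using sup by (simp add: v_def)
  have cvs: "\<forall>x. norm x \<ge> 2 * R \<longrightarrow> cv x = 0" using sup by (simp add: cv_def ccross_def cvec_def vec3_eq)
  have vU: "L2on UNIV v" using vL vs unfolding L2loc_def by (intro L2on_UNIV_supp) auto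
  have cvU: "L2on UNIV cv" using cvL cvs unfolding L2loc_def by (intro L2on_UNIV_supp) auto
  have AEs: "\<exists>R'. AE x in lebesgue. R' < norm x \<longrightarrow> v x = 0"
    using vs by (intro exI[of _ "2 * R"] AE_I2) auto
  have wk: "(\<integral>x. cdot (v x) (ccurl \<phi> x) \<partial>lebesgue) = (\<integral>x. cdot (cv x) (\<phi> x) \<partial>lebesgue)"
    if t: "test_fun \<phi>" for \<phi>
  proof -
    define \<psi> where "\<psi> x = chi R x *\<^sub>R \<phi> x" for x
    have d: "\<forall>x. \<phi> differentiable (at x)" using t unfolding test_fun_def by auto
    have t\<psi>: "test_fun \<psi>" unfolding \<psi>_def by (rule test_fun_chi[OF t])
    have c\<phi>: "continuous_on UNIV \<phi>" by (rule test_fun_cont[OF t])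
    have cc\<psi>: "continuous_on UNIV (ccurl \<psi>)" using t\<psi> unfolding test_fun_def by (intro cont_ccurl) auto
    have c\<psi>: "continuous_on UNIV \<psi>" by (rule test_fun_cont[OF t\<psi>])
    define X where "X x = ccross (cvec (gradchi R x)) (\<phi> x)" for x
    have cX: "continuous_on UNIV X" unfolding X_def by (rule cont_ccross[OF gradchi_cont c\<phi>])
    have ccurl\<psi>: "ccurl \<psi> x = chi R x *\<^sub>R ccurl \<phi> x + X x" for x
      unfolding \<psi>_def X_def by (rule ccurl_chi[OF d])
    have s\<psi>: "\<forall>x. norm x \<ge> 2 * R \<longrightarrow> \<psi> x = 0" using sup by (simp add: \<psi>_def)
    have sX: "\<forall>x. norm x \<ge> 2 * R \<longrightarrow> X x = 0" using sup by (simp add: X_def ccross_def cvec_def vec3_eq)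
    have scc: "\<forall>x. norm x \<ge> 2 * R \<longrightarrow> ccurl \<psi> x = 0" using sup sX by (simp add: ccurl\<psi>)
    have i1: "integrable lebesgue (\<lambda>x. cdot (u x) (ccurl \<psi> x))" by (rule integrable_cdot_loc[OF uL cc\<psi> scc])
    have i2: "integrable lebesgue (\<lambda>x. cdot (u x) (X x))" by (rule integrable_cdot_loc[OF uL cX sX])
    have i3: "integrable lebesgue (\<lambda>x. cdot (w x) (\<psi> x))" by (rule integrable_cdot_loc[OF wL c\<psi> s\<psi>])
    have p1: "cdot (v x) (ccurl \<phi> x) = cdot (u x) (ccurl \<psi> x) - cdot (u x) (X x)" for x
      unfolding v_def ccurl\<psi> cdot_add_right cdot_scaleR_left cdot_scaleR_right by simp
    have p2: "cdot (cv x) (\<phi> x) = cdot (w x) (\<psi> x) - cdot (u x) (X x)" for x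
      unfolding cv_def \<psi>_def X_def cdot_add_left cdot_scaleR_left cdot_scaleR_right triple_swap by simp
    have "(\<integral>x. cdot (v x) (ccurl \<phi> x) \<partial>lebesgue)
        = (\<integral>x. cdot (u x) (ccurl \<psi> x) \<partial>lebesgue) - (\<integral>x. cdot (u x) (X x) \<partial>lebesgue)"
      unfolding p1 by (rule Bochner_Integration.integral_diff[OF i1 i2])
    also have "\<dots> = (\<integral>x. cdot (w x) (\<psi> x) \<partial>lebesgue) - (\<integral>x. cdot (u x) (X x) \<partial>lebesgue)"
      using weak[OF t\<psi>] by simp
    also have "\<dots> = (\<integral>x. cdot (cv x) (\<phi> x) \<partial>lebesgue)"
      unfolding p2 by (rule Bochner_Integration.integral_diff[OF i3 i2, symmetric])
    finally show ?thesis .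
  qed
  have "Hloc_curl v cv" unfolding Hloc_curl_def using vL cvL wk by blast
  thus ?thesis using vU cvU AEs unfolding Hcurl_cs_def v_def[abs_def] cv_def[abs_def] by blast
qed

definition dd :: "real \<times> real \<Rightarrow> R3" where "dd p = sdir (fst p) (snd p)"
definition IH :: "(R3 \<Rightarrow> C3) \<Rightarrow> real \<times> real \<Rightarrow> C3" where
  "IH h p = indicator sph_param p *\<^sub>R h (dd p)"
definition Wn :: "(R3 \<Rightarrow> C3) \<Rightarrow> real \<times> real \<Rightarrow> real" where
  "Wn h p = sin (fst p) * norm (IH h p)"
definition ek :: "real \<Rightarrow> R3 \<Rightarrow> real \<times> real \<Rightarrow> complex" where
  "ek k x p = exp (\<i> * complex_of_real (k * (x \<bullet> dd p)))"
definition hint :: "real \<Rightarrow> (R3 \<Rightarrow> C3) \<Rightarrow> (real \<times> real \<Rightarrow> complex) \<Rightarrow> R3 \<Rightarrow> C3" where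
  "hint k h a x = (\<integral>p. sin (fst p) *\<^sub>R ((a p * ek k x p) *s IH h p) \<partial>lebesgue)"

lemma sph_cbox: "sph_param = cbox (0, 0) (pi, 2 * pi)"
  unfolding sph_param_def cbox_Pair_eq by simp

lemma sph_sets: "sph_param \<in> sets lebesgue" "emeasure lebesgue sph_param < \<infinity>"
  using lmeasurable_cbox[of "(0::real, 0::real)" "(pi, 2 * pi)"] unfolding sph_cbox fmeasurable_def by blast+

lemma sq_aux: "(x::real)\<^sup>2 + y\<^sup>2 = 1 \<Longrightarrow> z\<^sup>2 + w\<^sup>2 = 1 \<Longrightarrow> (x * w)\<^sup>2 + (x * z)\<^sup>2 + y\<^sup>2 = 1"
proof -
  assume a: "x\<^sup>2 + y\<^sup>2 = 1" "z\<^sup>2 + w\<^sup>2 = 1"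
  have "(x * w)\<^sup>2 + (x * z)\<^sup>2 + y\<^sup>2 = x\<^sup>2 * (z\<^sup>2 + w\<^sup>2) + y\<^sup>2" by (simp add: power_mult_distrib algebra_simps)
  thus ?thesis using a by simp
qed

lemma norm_sdir: "norm (sdir a b) = 1"
proof -
  have "(norm (sdir a b))\<^sup>2 = (sin a * cos b)\<^sup>2 + (sin a * sin b)\<^sup>2 + (cos a)\<^sup>2"
    unfolding norm_vec_def L2_set_def sdir_def by (simp add: sum_3)
  also have "\<dots> = 1" by (rule sq_aux) simp_all
  finally show ?thesis using norm_ge_zero[of "sdir a b"] by (simp add: power2_eq_1_iff)
qed

lemma cont_dd: "continuous_on UNIV dd"
  unfolding dd_def sdir_def by (intro cont_vector3 continuous_intros)

lemma cont_ek: "continuous_on UNIV (ek k x)"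
  unfolding ek_def by (intro continuous_intros continuous_on_compose2[OF cont_dd]) auto

lemma meas_IH: "L2t h \<Longrightarrow> IH h \<in> borel_measurable lebesgue"
  unfolding L2t_def IH_def dd_def by auto

lemma sin_IH: "\<bar>sin (fst p)\<bar> * norm (IH h p) = Wn h p"
proof (cases "p \<in> sph_param")
  case True
  hence "sin (fst p) \<ge> 0" unfolding sph_param_def by (auto intro!: sin_ge_zero)
  thus ?thesis unfolding Wn_def by simp
qed (simp add: IH_def Wn_def)

lemma Wn_nonneg: "Wn h p \<ge> 0"
  using sin_IH[of p h] by (metis abs_ge_zero mult_nonneg_nonneg norm_ge_zero)

lemma Wn_int: assumes "L2t h" shows "integrable lebesgue (Wn h)"
proof -
  have m: "IH h \<in> borel_measurable lebesgue" by (rule meas_IH[OF assms])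
  have ms: "(\<lambda>p::real\<times>real. sin (fst p)) \<in> borel_measurable lebesgue"
    by (rule cont_meas) (intro continuous_intros)
  have i2: "integrable lebesgue (\<lambda>p. sin (fst p) * (norm (IH h p))\<^sup>2)"
    unfolding integrable_iff_bounded
  proof
    show "(\<lambda>p. sin (fst p) * (norm (IH h p))\<^sup>2) \<in> borel_measurable lebesgue" using m ms by measurable
    have "(\<integral>\<^sup>+ p. ennreal (norm (sin (fst p) * (norm (IH h p))\<^sup>2)) \<partial>lebesgue)
       = (\<integral>\<^sup>+ p. ennreal (indicator sph_param p * sin (fst p) * (norm (h (sdir (fst p) (snd p))))^2) \<partial>lebesgue)"
    proof (intro nn_integral_cong)
      fix p
      show "ennreal (norm (sin (fst p) * (norm (IH h p))\<^sup>2)) =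
            ennreal (indicator sph_param p * sin (fst p) * (norm (h (sdir (fst p) (snd p))))^2)"
      proof (cases "p \<in> sph_param")
        case True
        hence "sin (fst p) \<ge> 0" unfolding sph_param_def by (auto intro!: sin_ge_zero)
        thus ?thesis using True by (simp add: IH_def dd_def abs_mult)
      qed (simp add: IH_def)
    qed
    also have "\<dots> < \<infinity>" using assms unfolding L2t_def by blast
    finally show "(\<integral>\<^sup>+ p. ennreal (norm (sin (fst p) * (norm (IH h p))\<^sup>2)) \<partial>lebesgue) < \<infinity>" .
  qed
  have i1: "integrable lebesgue (indicator sph_param :: real\<times>real \<Rightarrow> real)"
    using sph_sets by (rule integrable_real_indicator)
  show ?thesis
  proof (rule Bochner_Integration.integrable_bound)
    show "integrable lebesgue (\<lambda>p. indicator sph_param p + sin (fst p) * (norm (IH h p))\<^sup>2)" using i1 i2 by auto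
    show "Wn h \<in> borel_measurable lebesgue" unfolding Wn_def using m ms by measurable
    show "AE p in lebesgue. norm (Wn h p) \<le> norm (indicator sph_param p + sin (fst p) * (norm (IH h p))\<^sup>2)"
    proof (rule AE_I2)
      fix p
      show "norm (Wn h p) \<le> norm (indicator sph_param p + sin (fst p) * (norm (IH h p))\<^sup>2)"
      proof (cases "p \<in> sph_param")
        case True
        have s0: "sin (fst p) \<ge> 0" "sin (fst p) \<le> 1" using True unfolding sph_param_def by (auto intro!: sin_ge_zero)
        define n where "n = norm (IH h p)"
        have n0: "n \<ge> 0" unfolding n_def by simp
        have "n \<le> 1 + n\<^sup>2"
        proof -
          have "0 \<le> (n - 1)\<^sup>2" by simp
          moreover have "(n - 1)\<^sup>2 = n\<^sup>2 - 2 * n + 1" by (simp add: power2_eq_square algebra_simps)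
          ultimately show ?thesis using n0 by linarith
        qed
        hence "sin (fst p) * n \<le> sin (fst p) * (1 + n\<^sup>2)" using s0 by (intro mult_left_mono) auto
        also have "\<dots> \<le> 1 + sin (fst p) * n\<^sup>2" using s0 by (simp add: distrib_left)
        finally have "sin (fst p) * n \<le> 1 + sin (fst p) * n\<^sup>2" .
        moreover have "sin (fst p) * n \<ge> 0" "sin (fst p) * n\<^sup>2 \<ge> 0" using s0 n0 by auto
        ultimately show ?thesis using True unfolding Wn_def n_def by simp
      qed (simp add: Wn_def IH_def)
    qed
  qed
qed

lemma cont_smult: "continuous_on UNIV (\<lambda>q::complex\<times>C3. fst q *s snd q)"
  unfolding vector_scalar_mult_def by (intro continuous_intros)

lemma meas_smult[measurable (raw)]:
  "f \<in> borel_measurable M \<Longrightarrow> g \<in> borel_measurable M \<Longrightarrow> (\<lambda>x. (f x :: complex) *s (g x :: C3)) \<in> borel_measurable M"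
  by (rule borel_measurable_continuous_Pair[OF _ _ cont_smult[unfolded split_beta']]) auto

lemma norm_smult: "norm (c *s (v::C3)) = cmod c * norm v"
proof -
  have "(norm (c *s v))\<^sup>2 = (cmod c * norm v)\<^sup>2"
    unfolding norm_sq_vec3 power_mult_distrib
    by (simp add: vector_scalar_mult_def norm_mult power_mult_distrib sum_distrib_left)
  thus ?thesis by (simp add: power2_eq_iff_nonneg)
qed

lemma integrand_meas:
  assumes "L2t h" "continuous_on UNIV a"
  shows "(\<lambda>p. sin (fst p) *\<^sub>R ((a p * ek k x p) *s IH h p)) \<in> borel_measurable lebesgue"
proof -
  have m: "IH h \<in> borel_measurable lebesgue" by (rule meas_IH[OF assms(1)])
  have ms: "(\<lambda>p::real\<times>real. sin (fst p)) \<in> borel_measurable lebesgue"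
    by (rule cont_meas) (intro continuous_intros)
  have ma: "a \<in> borel_measurable lebesgue" by (rule cont_meas[OF assms(2)])
  have me: "ek k x \<in> borel_measurable lebesgue" by (rule cont_meas[OF cont_ek])
  show ?thesis using m ms ma me by measurable
qed

lemma integrand_norm:
  "norm (sin (fst p) *\<^sub>R ((a p * ek k x p) *s IH h p)) = cmod (a p) * Wn h p"
  unfolding norm_scaleR norm_smult norm_mult ek_def sin_IH[symmetric]
  by (simp add: mult_ac)

lemma integrand_int:
  assumes "L2t h" "continuous_on UNIV a" "\<And>p. cmod (a p) \<le> A"
  shows "integrable lebesgue (\<lambda>p. sin (fst p) *\<^sub>R ((a p * ek k x p) *s IH h p))"
proof (rule Bochner_Integration.integrable_bound)
  show "integrable lebesgue (\<lambda>p. A * Wn h p)" using Wn_int[OF assms(1)] by auto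
  show "(\<lambda>p. sin (fst p) *\<^sub>R ((a p * ek k x p) *s IH h p)) \<in> borel_measurable lebesgue"
    by (rule integrand_meas[OF assms(1,2)])
  show "AE p in lebesgue. norm (sin (fst p) *\<^sub>R ((a p * ek k x p) *s IH h p)) \<le> norm (A * Wn h p)"
  proof (rule AE_I2)
    fix p
    have "cmod (a p) * Wn h p \<le> A * Wn h p" using assms(3) Wn_nonneg by (rule mult_right_mono)
    thus "norm (sin (fst p) *\<^sub>R ((a p * ek k x p) *s IH h p)) \<le> norm (A * Wn h p)"
      unfolding integrand_norm by (simp add: Wn_nonneg)
  qed
qed

lemma iexp_diff: "cmod (exp (\<i> * complex_of_real s) - exp (\<i> * complex_of_real t)) \<le> \<bar>s - t\<bar>"
proof -
  have "exp (\<i> * complex_of_real s) - exp (\<i> * complex_of_real t)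
      = exp (\<i> * complex_of_real t) * (iexp (s - t) - 1)"
    by (simp add: algebra_simps exp_add[symmetric])
  hence "cmod (exp (\<i> * complex_of_real s) - exp (\<i> * complex_of_real t)) = cmod (iexp (s - t) - 1)"
    by (simp add: norm_mult)
  also have "\<dots> \<le> \<bar>s - t\<bar>" using iexp_approx1[of "s - t" 0] by simp
  finally show ?thesis .
qed

lemma ek_diff: "k \<ge> 0 \<Longrightarrow> cmod (ek k x p - ek k y p) \<le> k * norm (x - y)"
proof -
  assume k: "k \<ge> 0"
  have "cmod (ek k x p - ek k y p) \<le> \<bar>k * (x \<bullet> dd p) - k * (y \<bullet> dd p)\<bar>"
    unfolding ek_def by (rule iexp_diff)
  also have "\<dots> = k * \<bar>(x - y) \<bullet> dd p\<bar>" using k by (simp add: inner_diff_left right_diff_distrib[symmetric] abs_mult)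
  also have "\<dots> \<le> k * (norm (x - y) * norm (dd p))" using k by (intro mult_left_mono Cauchy_Schwarz_ineq2) auto
  also have "\<dots> = k * norm (x - y)" by (simp add: dd_def norm_sdir)
  finally show ?thesis .
qed

lemma smult_diff: "(c1 *s (v::C3)) - (c2 *s v) = (c1 - c2) *s v"
  by (simp add: vec_eq_iff vector_scalar_mult_def algebra_simps)

lemma hint_lip:
  assumes h: "L2t h" and c: "continuous_on UNIV a" and A: "\<And>p. cmod (a p) \<le> A" and k: "k \<ge> 0"
  shows "norm (hint k h a x - hint k h a y) \<le> (A * k * integral\<^sup>L lebesgue (Wn h)) * norm (x - y)"
proof -
  have ix: "integrable lebesgue (\<lambda>p. sin (fst p) *\<^sub>R ((a p * ek k x p) *s IH h p))" by (rule integrand_int[OF h c A])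
  have iy: "integrable lebesgue (\<lambda>p. sin (fst p) *\<^sub>R ((a p * ek k y p) *s IH h p))" by (rule integrand_int[OF h c A])
  have "hint k h a x - hint k h a y = (\<integral>p. sin (fst p) *\<^sub>R ((a p * ek k x p) *s IH h p)
                                       - sin (fst p) *\<^sub>R ((a p * ek k y p) *s IH h p) \<partial>lebesgue)"
    unfolding hint_def by (rule Bochner_Integration.integral_diff[OF ix iy, symmetric])
  also have "norm \<dots> \<le> (\<integral>p. (A * k * norm (x - y)) * Wn h p \<partial>lebesgue)"
  proof (rule Bochner_Integration.integral_norm_bound_integral)
    show "integrable lebesgue (\<lambda>p. sin (fst p) *\<^sub>R ((a p * ek k x p) *s IH h p)
                                       - sin (fst p) *\<^sub>R ((a p * ek k y p) *s IH h p))" using ix iy by auto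
    show "integrable lebesgue (\<lambda>p. (A * k * norm (x - y)) * Wn h p)" using Wn_int[OF h] by auto
    fix p
    have e: "sin (fst p) *\<^sub>R ((a p * ek k x p) *s IH h p) - sin (fst p) *\<^sub>R ((a p * ek k y p) *s IH h p)
        = sin (fst p) *\<^sub>R ((a p * (ek k x p - ek k y p)) *s IH h p)"
      by (simp add: vec_eq_iff vector_scalar_mult_def scR_comp algebra_simps del: vector_scaleR_component)
    have A0: "A \<ge> 0" using A[of p] norm_ge_zero order_trans by blast
    have "cmod (a p * (ek k x p - ek k y p)) \<le> A * (k * norm (x - y))"
      unfolding norm_mult using A ek_diff[OF k] A0 by (intro mult_mono) auto
    hence "cmod (a p * (ek k x p - ek k y p)) * Wn h p \<le> A * (k * norm (x - y)) * Wn h p"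
      using Wn_nonneg by (rule mult_right_mono)
    thus "norm (sin (fst p) *\<^sub>R ((a p * ek k x p) *s IH h p) - sin (fst p) *\<^sub>R ((a p * ek k y p) *s IH h p))
          \<le> (A * k * norm (x - y)) * Wn h p"
      unfolding e norm_scaleR norm_smult sin_IH[symmetric] by (simp add: mult_ac)
  qed
  also have "\<dots> = (A * k * integral\<^sup>L lebesgue (Wn h)) * norm (x - y)" by simp
  finally show ?thesis .
qed

lemma hint_cont:
  assumes h: "L2t h" and c: "continuous_on UNIV a" and A: "\<And>p. cmod (a p) \<le> A" and k: "k \<ge> 0"
  shows "continuous_on UNIV (hint k h a)"
proof -
  define L where "L = A * k * integral\<^sup>L lebesgue (Wn h)"
  have "\<forall>x y. dist (hint k h a x) (hint k h a y) \<le> L * dist x y"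
    unfolding dist_norm L_def using hint_lip[OF h c A k] by blast
  hence "lipschitz_on (max L 0) UNIV (hint k h a)"
  proof (intro lipschitz_onI)
    fix x y assume "\<forall>x y. dist (hint k h a x) (hint k h a y) \<le> L * dist x y"
    hence "dist (hint k h a x) (hint k h a y) \<le> L * dist x y" by blast
    also have "L * dist x y \<le> max L 0 * dist x y" by (rule mult_right_mono) auto
    finally show "dist (hint k h a x) (hint k h a y) \<le> max L 0 * dist x y" .
  qed auto
  thus ?thesis by (rule lipschitz_on_continuous_on)
qed

definition aj :: "real \<Rightarrow> 3 \<Rightarrow> real \<times> real \<Rightarrow> complex" where
  "aj k j p = \<i> * complex_of_real k * complex_of_real (dd p $ j)"

lemma herglotz_hint: "herglotz1 k h = hint k h (\<lambda>_. 1)"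
proof
  fix x
  have "(indicator sph_param p * sin (fst p)) *\<^sub>R
          (exp (\<i> * complex_of_real (k * (x \<bullet> sdir (fst p) (snd p)))) *s h (sdir (fst p) (snd p)))
        = sin (fst p) *\<^sub>R ((1 * ek k x p) *s IH h p)" for p
    unfolding vec_eq_iff IH_def ek_def dd_def
    by (simp add: scR_comp vector_scalar_mult_def mult_ac del: vector_scaleR_component)
  thus "herglotz1 k h x = hint k h (\<lambda>_. 1) x" unfolding herglotz1_def hint_def by simp
qed

lemma vec_alg:
  "s *\<^sub>R (\<alpha> *s (P::C3)) - s *\<^sub>R (\<beta> *s P) - (\<Sum>j\<in>UNIV. r j *\<^sub>R (s *\<^sub>R (\<gamma> j *s P)))
   = s *\<^sub>R ((\<alpha> - \<beta> - (\<Sum>j\<in>UNIV. complex_of_real (r j) * \<gamma> j)) *s P)"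
  unfolding vec_eq_iff
  by (simp add: scR_comp vector_scalar_mult_def sum_distrib_left sum_distrib_right algebra_simps
           del: vector_scaleR_component)

lemma sum_aj: "(\<Sum>j\<in>UNIV. complex_of_real (c $ j) * aj k j p) = \<i> * complex_of_real k * complex_of_real (c \<bullet> dd p)"
  unfolding aj_def inner_vec_def
  by (simp add: sum_distrib_left mult_ac)

lemma cont_aj: "continuous_on UNIV (aj k j)"
  unfolding aj_def by (intro continuous_intros continuous_on_compose2[OF cont_dd]) auto

lemma aj_bound: "k \<ge> 0 \<Longrightarrow> cmod (aj k j p) \<le> k"
proof -
  assume k: "k \<ge> 0"
  have "\<bar>dd p $ j\<bar> \<le> 1" using component_le_norm_cart[of "dd p" j] by (simp add: dd_def norm_sdir)
  hence "k * \<bar>dd p $ j\<bar> \<le> k * 1" using k by (intro mult_left_mono) auto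
  thus ?thesis unfolding aj_def using k by (simp add: norm_mult)
qed

lemma iexp_taylor: "cmod (iexp t - 1 - \<i> * complex_of_real t) \<le> t\<^sup>2 / 2"
  using iexp_approx1[of t 1] by (simp add: algebra_simps power2_eq_square)

lemma herglotz_deriv:
  assumes h: "L2t h" and k: "k \<ge> 0"
  shows "(herglotz1 k h has_derivative (\<lambda>v. \<Sum>j\<in>UNIV. (v $ j) *\<^sub>R hint k h (aj k j) x)) (at x)"
  unfolding herglotz_hint
proof (rule quad_remainder_deriv[where K = "k\<^sup>2 * integral\<^sup>L lebesgue (Wn h) / 2"])
  show "bounded_linear (\<lambda>v. \<Sum>j\<in>UNIV. (v $ j) *\<^sub>R hint k h (aj k j) x)"
    by (intro bounded_linear_sum bounded_linear_compose[OF bounded_linear_scaleR_left bounded_linear_vec_nth])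
  fix y
  define c where "c = y - x"
  define I where "I z p = sin (fst p) *\<^sub>R ((1 * ek k z p) *s IH h p)" for z p
  define J where "J j p = sin (fst p) *\<^sub>R ((aj k j p * ek k x p) *s IH h p)" for j p
  have c1: "continuous_on UNIV (\<lambda>_::real\<times>real. 1::complex)" by simp
  have iI: "integrable lebesgue (I z)" for z unfolding I_def by (rule integrand_int[OF h c1, of 1]) simp
  have iJ: "integrable lebesgue (J j)" for j unfolding J_def by (rule integrand_int[OF h cont_aj aj_bound[OF k]])
  have "hint k h (\<lambda>_. 1) y - hint k h (\<lambda>_. 1) x - (\<Sum>j\<in>UNIV. c $ j *\<^sub>R hint k h (aj k j) x)
      = (\<integral>p. I y p - I x p - (\<Sum>j\<in>UNIV. c $ j *\<^sub>R J j p) \<partial>lebesgue)"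
  proof -
    have "(\<integral>p. (\<Sum>j\<in>UNIV. c $ j *\<^sub>R J j p) \<partial>lebesgue) = (\<Sum>j\<in>UNIV. (\<integral>p. c $ j *\<^sub>R J j p \<partial>lebesgue))"
      using iJ by (intro Bochner_Integration.integral_sum) auto
    also have "\<dots> = (\<Sum>j\<in>UNIV. c $ j *\<^sub>R (\<integral>p. J j p \<partial>lebesgue))" by simp
    also have "\<dots> = (\<Sum>j\<in>UNIV. c $ j *\<^sub>R hint k h (aj k j) x)" unfolding J_def hint_def ..
    finally have "(\<integral>p. (\<Sum>j\<in>UNIV. c $ j *\<^sub>R J j p) \<partial>lebesgue) = (\<Sum>j\<in>UNIV. c $ j *\<^sub>R hint k h (aj k j) x)" .
    moreover have "(\<integral>p. I y p - I x p - (\<Sum>j\<in>UNIV. c $ j *\<^sub>R J j p) \<partial>lebesgue)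
        = (\<integral>p. I y p \<partial>lebesgue) - (\<integral>p. I x p \<partial>lebesgue) - (\<integral>p. (\<Sum>j\<in>UNIV. c $ j *\<^sub>R J j p) \<partial>lebesgue)"
      using iI iJ by (simp add: Bochner_Integration.integral_diff)
    ultimately show ?thesis unfolding hint_def I_def by simp
  qed
  also have "norm \<dots> \<le> (\<integral>p. (k\<^sup>2 * (norm c)\<^sup>2 / 2) * Wn h p \<partial>lebesgue)"
  proof (rule Bochner_Integration.integral_norm_bound_integral)
    show "integrable lebesgue (\<lambda>p. I y p - I x p - (\<Sum>j\<in>UNIV. c $ j *\<^sub>R J j p))" using iI iJ by auto
    show "integrable lebesgue (\<lambda>p. (k\<^sup>2 * (norm c)\<^sup>2 / 2) * Wn h p)" using Wn_int[OF h] by auto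
    fix p
    define t where "t = k * (c \<bullet> dd p)"
    have ey: "ek k y p = ek k x p * iexp t"
      unfolding ek_def t_def c_def by (simp add: inner_diff_left algebra_simps exp_add[symmetric])
    have e: "I y p - I x p - (\<Sum>j\<in>UNIV. c $ j *\<^sub>R J j p)
       = sin (fst p) *\<^sub>R ((ek k x p * (iexp t - 1 - \<i> * complex_of_real t)) *s IH h p)"
    proof -
      have sa: "(\<Sum>j\<in>UNIV. complex_of_real (c $ j) * (aj k j p * ek k x p))
          = \<i> * complex_of_real k * complex_of_real (c \<bullet> dd p) * ek k x p"
        unfolding sum_aj[symmetric] sum_distrib_right by (simp add: mult.assoc)
      show ?thesis unfolding I_def J_def vec_alg sa ey t_def by (simp add: algebra_simps)
    qed
    have tb: "\<bar>t\<bar> \<le> k * norm c"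
    proof -
      have "\<bar>c \<bullet> dd p\<bar> \<le> norm c * norm (dd p)" by (rule Cauchy_Schwarz_ineq2)
      hence "\<bar>c \<bullet> dd p\<bar> \<le> norm c" by (simp add: dd_def norm_sdir)
      thus ?thesis unfolding t_def using k by (simp add: abs_mult mult_left_mono)
    qed
    have "t\<^sup>2 \<le> (k * norm c)\<^sup>2" using tb by (metis abs_le_square_iff abs_mult_self_eq power2_abs abs_ge_zero order_trans norm_ge_zero k mult_nonneg_nonneg abs_of_nonneg)
    hence "cmod (ek k x p * (iexp t - 1 - \<i> * complex_of_real t)) \<le> k\<^sup>2 * (norm c)\<^sup>2 / 2"
      using iexp_taylor[of t] unfolding norm_mult ek_def by (simp add: power_mult_distrib)
    hence "cmod (ek k x p * (iexp t - 1 - \<i> * complex_of_real t)) * Wn h p \<le> k\<^sup>2 * (norm c)\<^sup>2 / 2 * Wn h p"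
      using Wn_nonneg by (rule mult_right_mono)
    thus "norm (I y p - I x p - (\<Sum>j\<in>UNIV. c $ j *\<^sub>R J j p)) \<le> k\<^sup>2 * (norm c)\<^sup>2 / 2 * Wn h p"
      unfolding e norm_scaleR norm_smult sin_IH[symmetric] by (simp add: mult_ac)
  qed
  also have "\<dots> = k\<^sup>2 * integral\<^sup>L lebesgue (Wn h) / 2 * (norm c)\<^sup>2" by simp
  finally show "norm (hint k h (\<lambda>_. 1) y - hint k h (\<lambda>_. 1) x - (\<Sum>j\<in>UNIV. (y - x) $ j *\<^sub>R hint k h (aj k j) x))
      \<le> k\<^sup>2 * integral\<^sup>L lebesgue (Wn h) / 2 * (norm (y - x))\<^sup>2" unfolding c_def .
qed

lemma pd_herglotz:
  assumes h: "L2t h" and k: "k \<ge> 0"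
  shows "pd (herglotz1 k h) j = hint k h (aj k j)"
proof
  fix x
  have fd: "(\<lambda>v. \<Sum>i\<in>UNIV. (v $ i) *\<^sub>R hint k h (aj k i) x) = frechet_derivative (herglotz1 k h) (at x)"
    by (rule frechet_derivative_at[OF herglotz_deriv[OF h k]])
  have s: "(\<Sum>i\<in>UNIV. (axis j (1::real) $ i) *\<^sub>R F i) = F j" for F :: "3 \<Rightarrow> C3"
  proof -
    have "(axis j (1::real) $ i) *\<^sub>R F i = (if i = j then F i else 0)" for i by (simp add: axis_def)
    thus ?thesis by simp
  qed
  from fun_cong[OF fd, of "axis j 1"] show "pd (herglotz1 k h) j x = hint k h (aj k j) x"
    unfolding pd_def s by simp
qed

lemma herglotz_cont: "L2t h \<Longrightarrow> k \<ge> 0 \<Longrightarrow> continuous_on UNIV (herglotz1 k h)"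
  unfolding herglotz_hint by (rule hint_cont[where A=1]) auto

lemma herglotz_curl_cont: "L2t h \<Longrightarrow> k \<ge> 0 \<Longrightarrow> continuous_on UNIV (ccurl (herglotz1 k h))"
  by (intro cont_ccurl allI, unfold pd_herglotz) (rule hint_cont[OF _ cont_aj aj_bound])

lemma cdot_vcnj_swap: "cdot F (vcnj G) = cnj (cdot G (vcnj F))"
  unfolding cdot_def vcnj_def by (simp add: mult.commute)

lemma set_integral_cnj: "(LINT x:D|M. cnj (X x)) = cnj (LINT x:D|M. X x)"
proof -
  have "(\<lambda>x. indicator D x *\<^sub>R cnj (X x)) = (\<lambda>x. cnj (indicator D x *\<^sub>R X x))" by simp
  thus ?thesis unfolding set_lebesgue_integral_def using Bochner_Integration.integral_cnj[of M "\<lambda>x. indicator D x *\<^sub>R X x"] by metis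
qed

lemma ip_swap: "ip D F G = cnj (ip D G F)"
  unfolding ip_def cdot_vcnj_swap[of "F _"] set_integral_cnj ..

lemma Re_im_trick: "Re ((z - cnj z) / (2 * \<i>)) = Im z"
  by (simp add: complex_diff_cnj)

lemma L2on_cont:
  assumes c: "continuous_on UNIV F" and b: "bounded \<Omega>" and s: "\<Omega> \<in> sets lebesgue"
  shows "L2on \<Omega> (F :: R3 \<Rightarrow> C3)"
proof -
  obtain r where r: "\<Omega> \<subseteq> ball 0 r" using b bounded_subset_ballD by blast
  have "compact (F ` cball 0 r)" by (rule compact_continuous_image[OF continuous_on_subset[OF c]]) auto
  then obtain B where B: "\<forall>y\<in>F ` cball 0 r. norm y \<le> B" using compact_imp_bounded bounded_iff by metis
  have Bx: "x \<in> \<Omega> \<Longrightarrow> norm (F x) \<le> B" for x using B r by fastforce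
  have m: "(\<lambda>x. indicator \<Omega> x *\<^sub>R F x) \<in> borel_measurable lebesgue"
    using cont_meas[OF c] s by measurable
  have ib: "integrable lebesgue (indicator (ball (0::R3) r) :: R3 \<Rightarrow> real)"
  proof -
    have l: "ball (0::R3) r \<in> sets lebesgue" "emeasure lebesgue (ball (0::R3) r) < \<infinity>"
      using lmeasurable_ball[of "0::R3" r] unfolding fmeasurable_def by blast+
    show ?thesis using integrable_real_indicator[OF l] .
  qed
  have "integrable lebesgue (\<lambda>x. (norm (indicator \<Omega> x *\<^sub>R F x))\<^sup>2)"
  proof (rule Bochner_Integration.integrable_bound)
    show "integrable lebesgue (\<lambda>x::R3. B\<^sup>2 * indicator (ball 0 r) x)" by (rule Bochner_Integration.integrable_mult_right, rule ib)
    show "(\<lambda>x. (norm (indicator \<Omega> x *\<^sub>R F x))\<^sup>2) \<in> borel_measurable lebesgue" using m by measurable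
    show "AE x in lebesgue. norm ((norm (indicator \<Omega> x *\<^sub>R F x))\<^sup>2) \<le> norm (B\<^sup>2 * indicator (ball 0 r) x)"
    proof (rule AE_I2)
      fix x
      show "norm ((norm (indicator \<Omega> x *\<^sub>R F x))\<^sup>2) \<le> norm (B\<^sup>2 * indicator (ball 0 r) x)"
      proof (cases "x \<in> \<Omega>")
        case True
        hence "(norm (F x))\<^sup>2 \<le> B\<^sup>2" using Bx by (intro power_mono) auto
        thus ?thesis using True r by auto
      qed simp
    qed
  qed
  thus ?thesis unfolding L2on_iff using m by simp
qed

lemma L2on_of_loc: "L2loc F \<Longrightarrow> \<Omega> \<subseteq> ball 0 r \<Longrightarrow> \<Omega> \<in> sets lebesgue \<Longrightarrow> L2on \<Omega> F"
  unfolding L2loc_def using L2on_subset by blast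

lemma set_int_cdot:
  assumes F: "L2on \<Omega> F" and G: "L2on \<Omega> G"
  shows "set_integrable lebesgue \<Omega> (\<lambda>x. cdot (F x) (vcnj (G x)))"
  unfolding set_integrable_def
proof -
  define F' where "F' x = indicator \<Omega> x *\<^sub>R F x" for x
  define G' where "G' x = indicator \<Omega> x *\<^sub>R G x" for x
  have mF: "F' \<in> borel_measurable lebesgue" and iF: "integrable lebesgue (\<lambda>x. (norm (F' x))\<^sup>2)"
    using F unfolding L2on_iff F'_def by auto
  have mG: "G' \<in> borel_measurable lebesgue" and iG: "integrable lebesgue (\<lambda>x. (norm (G' x))\<^sup>2)"
    using G unfolding L2on_iff G'_def by auto
  have e: "indicator \<Omega> x *\<^sub>R cdot (F x) (vcnj (G x)) = cdot (F' x) (vcnj (G' x))" for x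
    unfolding F'_def G'_def by (simp add: indicator_def cdot_def vcnj_def)
  show "integrable lebesgue (\<lambda>x. indicator \<Omega> x *\<^sub>R cdot (F x) (vcnj (G x)))" unfolding e
  proof (rule Bochner_Integration.integrable_bound)
    show "integrable lebesgue (\<lambda>x. (norm (F' x))\<^sup>2 + (norm (G' x))\<^sup>2)" using iF iG by auto
    show "(\<lambda>x. cdot (F' x) (vcnj (G' x))) \<in> borel_measurable lebesgue" using mF mG by measurable
    show "AE x in lebesgue. norm (cdot (F' x) (vcnj (G' x))) \<le> norm ((norm (F' x))\<^sup>2 + (norm (G' x))\<^sup>2)"
    proof (rule AE_I2)
      fix x
      have "norm (cdot (F' x) (vcnj (G' x))) \<le> norm (F' x) * norm (G' x)" using cdot_bound[of "F' x" "vcnj (G' x)"] by simp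
      also have "\<dots> \<le> (norm (F' x))\<^sup>2 + (norm (G' x))\<^sup>2"
      proof -
        have "0 \<le> (norm (F' x) - norm (G' x))\<^sup>2" by simp
        moreover have "(norm (F' x) - norm (G' x))\<^sup>2 = (norm (F' x))\<^sup>2 + (norm (G' x))\<^sup>2 - 2 * (norm (F' x) * norm (G' x))"
          by (simp add: power2_eq_square algebra_simps)
        ultimately show ?thesis using mult_nonneg_nonneg[OF norm_ge_zero norm_ge_zero, of "F' x" "G' x"] by linarith
      qed
      finally show "norm (cdot (F' x) (vcnj (G' x))) \<le> norm ((norm (F' x))\<^sup>2 + (norm (G' x))\<^sup>2)" by simp
    qed
  qed
qed

lemma set_int_norm: "L2on \<Omega> F \<Longrightarrow> set_integrable lebesgue \<Omega> (\<lambda>x. (norm (F x))\<^sup>2)"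
proof -
  assume "L2on \<Omega> F"
  hence "integrable lebesgue (\<lambda>x. (norm (indicator \<Omega> x *\<^sub>R F x))\<^sup>2)" unfolding L2on_iff by blast
  moreover have "(\<lambda>x. (norm (indicator \<Omega> x *\<^sub>R F x))\<^sup>2) = (\<lambda>x. indicator \<Omega> x *\<^sub>R (norm (F x))\<^sup>2)"
    by (simp add: indicator_def fun_eq_iff)
  ultimately show ?thesis unfolding set_integrable_def by simp
qed

lemma set_integral_Im:
  "set_integrable M A F \<Longrightarrow> Im (LINT x:A|M. F x) = (LINT x:A|M. Im (F x))"
  unfolding set_integrable_def set_lebesgue_integral_def
  using integral_bounded_linear[OF bounded_linear_Im, of M "\<lambda>x. indicator A x *\<^sub>R F x"] by simp

lemma cross_identity:
  "cdot w (vcnj (ccross (cvec (c *\<^sub>R y)) u)) = complex_of_real c * cdot (ccross w (cvec y)) (vcnj u)"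
  unfolding cdot_3 ccross_def cvec_def vcnj_def by (simp add: algebra_simps)

lemma cmod_sq_diff: "(cmod (a - \<i> * complex_of_real k * b))\<^sup>2 = (cmod a)\<^sup>2 + k\<^sup>2 * (cmod b)\<^sup>2 - 2 * k * Im (a * cnj b)"
  unfolding cmod_power2 by (simp add: power2_eq_square algebra_simps)

lemma Im_lower:
  assumes k: "k > 0"
  shows "Im (cdot A (vcnj u)) \<ge> - (norm (A - (\<i> * complex_of_real k) *s u))\<^sup>2 / (2 * k)"
proof -
  have "(norm (A - (\<i> * complex_of_real k) *s u))\<^sup>2 = (\<Sum>i\<in>UNIV. (cmod (A$i - \<i> * complex_of_real k * u$i))\<^sup>2)"
    unfolding norm_sq_vec3 by (simp add: vector_scalar_mult_def)
  also have "\<dots> = (\<Sum>i\<in>UNIV. ((cmod (A$i))\<^sup>2 + k\<^sup>2 * (cmod (u$i))\<^sup>2) - 2 * k * Im (A$i * cnj (u$i)))"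
    unfolding cmod_sq_diff by simp
  also have "\<dots> = (\<Sum>i\<in>UNIV. (cmod (A$i))\<^sup>2 + k\<^sup>2 * (cmod (u$i))\<^sup>2) - 2 * k * (\<Sum>i\<in>UNIV. Im (A$i * cnj (u$i)))"
    by (simp only: sum_subtractf sum_distrib_left)
  also have "(\<Sum>i\<in>UNIV. Im (A$i * cnj (u$i))) = Im (cdot A (vcnj u))"
    by (simp add: cdot_def vcnj_def Im_sum)
  finally have e: "(norm (A - (\<i> * complex_of_real k) *s u))\<^sup>2 = (\<Sum>i\<in>UNIV. (cmod (A$i))\<^sup>2 + k\<^sup>2 * (cmod (u$i))\<^sup>2) - 2 * k * Im (cdot A (vcnj u))" .
  have "(\<Sum>i\<in>UNIV. (cmod (A$i))\<^sup>2 + k\<^sup>2 * (cmod (u$i))\<^sup>2) \<ge> 0" by (intro sum_nonneg) auto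
  hence "2 * k * Im (cdot A (vcnj u)) \<ge> - (norm (A - (\<i> * complex_of_real k) *s u))\<^sup>2" using e by linarith
  thus ?thesis using k by (simp add: field_simps)
qed

lemma vcnj_diff: "vcnj (a - b) = vcnj a - vcnj b"
  unfolding vcnj_def by (simp add: vec_eq_iff)
lemma vcnj_scaleR: "vcnj (r *\<^sub>R a) = r *\<^sub>R vcnj a"
  unfolding vcnj_def by (simp add: vec_eq_iff)

lemma ball_volume_int: "r \<ge> 0 \<Longrightarrow> (\<integral>x. indicator (ball (0::R3) r) x \<partial>lebesgue) = 4 / 3 * r ^ 3 * pi"
proof -
  assume r: "r \<ge> 0"
  have "(\<integral>x. indicator (ball (0::R3) r) x \<partial>lebesgue) = measure lebesgue (ball (0::R3) r)" by simp
  also have "\<dots> = measure lborel (ball (0::R3) r)" by (simp add: measure_completion)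
  also have "\<dots> = 4 / 3 * r ^ 3 * pi" using sphere_volume[OF r] by simp
  finally show ?thesis .
qed

lemma Im_F_eq:
  "Im (cdot (w x) (vcnj (chi R x *\<^sub>R w x + ccross (cvec (gradchi R x)) (u x)))
       - complex_of_real (k^2) * cdot (u x) (vcnj (chi R x *\<^sub>R u x)))
   = Im (cdot (w x) (vcnj (ccross (cvec (gradchi R x)) (u x))))"
  unfolding vcnj_add vcnj_scaleR cdot_add_right cdot_scaleR_right cdot_self by simp

lemma pointwise_cut:
  assumes k: "k > 0" and R: "R > 0"
    and sm: "R0 \<le> norm x \<longrightarrow> norm (ccross (w x) (cvec (x /\<^sub>R norm x)) - (\<i> * complex_of_real k) *s u x) \<le> C / (norm x)\<^sup>2"
    and RR0: "R0 \<le> R"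
  shows "Im (cdot (w x) (vcnj (chi R x *\<^sub>R w x + ccross (cvec (gradchi R x)) (u x)))
       - complex_of_real (k^2) * cdot (u x) (vcnj (chi R x *\<^sub>R u x)))
     \<le> (2 * C\<^sup>2 / (k * R ^ 5)) * indicator (ball 0 (2 * R)) x"
proof -
  obtain c where c: "c \<le> 0" "\<bar>c\<bar> \<le> 4 / R" "gradchi R x = c *\<^sub>R (x /\<^sub>R norm x)"
    using gradchi_radial[OF R] by blast
  define A where "A = ccross (w x) (cvec (x /\<^sub>R norm x))"
  define N where "N = norm (A - (\<i> * complex_of_real k) *s u x)"
  have e: "Im (cdot (w x) (vcnj (chi R x *\<^sub>R w x + ccross (cvec (gradchi R x)) (u x)))
       - complex_of_real (k^2) * cdot (u x) (vcnj (chi R x *\<^sub>R u x))) = c * Im (cdot A (vcnj (u x)))"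
    unfolding Im_F_eq unfolding c(3) cross_identity A_def by simp
  have Kb0: "2 * C\<^sup>2 / (k * R ^ 5) \<ge> 0" using k R by simp
  show ?thesis
  proof (cases "R < norm x \<and> norm x < 2 * R")
    case False
    hence "gradchi R x = 0" using chi_inner[OF R, of x] chi_outer[OF R, of x] by fastforce
    hence "Im (cdot (w x) (vcnj (chi R x *\<^sub>R w x + ccross (cvec (gradchi R x)) (u x)))
       - complex_of_real (k^2) * cdot (u x) (vcnj (chi R x *\<^sub>R u x))) = 0"
      unfolding Im_F_eq by (simp add: ccross_def cvec_def cdot_3 vcnj_def)
    moreover have "0 \<le> (2 * C\<^sup>2 / (k * R ^ 5)) * indicator (ball 0 (2 * R)) x"
      by (rule mult_nonneg_nonneg[OF Kb0]) simp
    ultimately show ?thesis by linarith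
  next
    case True
    have "x \<in> ball 0 (2 * R)" using True mem_ball_0 by blast
    hence ind: "indicator (ball 0 (2 * R)) x = (1::real)" by (meson indicator_simps(1))
    have xR: "norm x \<ge> R" using True by simp
    have N1: "N \<le> C / (norm x)\<^sup>2" using sm RR0 xR unfolding N_def A_def by simp
    have "norm x > 0" using True R by linarith
    hence nx: "(norm x)\<^sup>2 > 0" by simp
    have C0: "C \<ge> 0"
    proof -
      have "0 \<le> C / (norm x)\<^sup>2" using N1 norm_ge_zero[of "A - (\<i> * complex_of_real k) *s u x"] unfolding N_def by linarith
      thus ?thesis using nx by (simp add: zero_le_divide_iff)
    qed
    have "C / (norm x)\<^sup>2 \<le> C / R\<^sup>2" using C0 R xR nx by (intro divide_left_mono power_mono) auto
    hence N2: "N \<le> C / R\<^sup>2" using N1 by linarith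
    have N3: "N\<^sup>2 \<le> (C / R\<^sup>2)\<^sup>2" using N2 unfolding N_def by (intro power_mono) auto
    have Iz: "Im (cdot A (vcnj (u x))) \<ge> - N\<^sup>2 / (2 * k)" unfolding N_def by (rule Im_lower[OF k])
    have "c * Im (cdot A (vcnj (u x))) \<le> c * (- N\<^sup>2 / (2 * k))" using Iz c(1) by (rule mult_left_mono_neg)
    also have "\<dots> = (- c) * (N\<^sup>2 / (2 * k))" by simp
    also have "\<dots> \<le> (4 / R) * ((C / R\<^sup>2)\<^sup>2 / (2 * k))"
    proof (rule mult_mono)
      show "- c \<le> 4 / R" using c by linarith
      show "N\<^sup>2 / (2 * k) \<le> (C / R\<^sup>2)\<^sup>2 / (2 * k)" using N3 k by (intro divide_right_mono) auto
    qed (use R k c in auto)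
    also have "\<dots> = 2 * C\<^sup>2 / (k * R ^ 5)" using R k by (simp add: field_simps power2_eq_square power_numeral_reduce)
    finally show ?thesis unfolding e ind by simp
  qed
qed

lemma cutoff_bound:
  fixes k :: real and \<Omega> :: "R3 set"
  assumes k: "k > 0" and \<Omega>r: "\<Omega> \<subseteq> ball 0 r0" and \<Omega>s: "\<Omega> \<in> sets lebesgue"
    and sol: "solves k \<Omega> eps mu xi zeta f g u w"
  shows "Im (LINT x:\<Omega>|lebesgue. cdot (T1 k eps mu xi zeta f g u w x) (vcnj (u x))
                              + cdot (T2 k eps mu xi zeta f g u w x) (vcnj (w x))) \<le> 0"
proof -
  have H: "Hloc_curl u w"
    and weq: "\<And>v cv. Hcurl_cs v cv \<Longrightarrow>
        (\<integral>x. cdot (w x) (vcnj (cv x)) - complex_of_real (k^2) * cdot (u x) (vcnj (v x)) \<partial>lebesgue)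
        = (LINT x:\<Omega>|lebesgue. cdot (T1 k eps mu xi zeta f g u w x) (vcnj (v x))
                             + cdot (T2 k eps mu xi zeta f g u w x) (vcnj (cv x)))"
    and SM: "silver_mueller k u w" using sol unfolding solves_def by blast+
  obtain R0 C where sm: "AE x in lebesgue. R0 \<le> norm x \<longrightarrow>
      norm (ccross (w x) (cvec (x /\<^sub>R norm x)) - (\<i> * complex_of_real k) *s u x) \<le> C / (norm x)^2"
    using SM unfolding silver_mueller_def by blast
  define Z where "Z = (LINT x:\<Omega>|lebesgue. cdot (T1 k eps mu xi zeta f g u w x) (vcnj (u x))
                              + cdot (T2 k eps mu xi zeta f g u w x) (vcnj (w x)))"
  have "Im Z \<le> 0 + e" if e: "e > 0" for e
  proof -
    define K0 where "K0 = 2 * C\<^sup>2 / k * (4 / 3 * 8 * pi)"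
    have K00: "K0 \<ge> 0" unfolding K0_def using k by simp
    define R where "R = max (max r0 R0) 1 + K0 / e"
    have Ke: "K0 / e \<ge> 0" using K00 e by simp
    have mx: "max (max r0 R0) 1 \<ge> 1" "max (max r0 R0) 1 \<ge> r0" "max (max r0 R0) 1 \<ge> R0" by auto
    have R1: "R \<ge> 1" and Rr0: "R \<ge> r0" and RR0: "R \<ge> R0" and RK: "R \<ge> K0 / e"
      unfolding R_def using Ke mx by linarith+
    have R: "R > 0" using R1 by simp
    define v where "v x = chi R x *\<^sub>R u x" for x
    define cv where "cv x = chi R x *\<^sub>R w x + ccross (cvec (gradchi R x)) (u x)" for x
    have "Hcurl_cs v cv" unfolding v_def[abs_def] cv_def[abs_def] by (rule cutoff_Hcurl[OF R H])
    note eq = weq[OF this]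
    have "(LINT x:\<Omega>|lebesgue. cdot (T1 k eps mu xi zeta f g u w x) (vcnj (v x))
                             + cdot (T2 k eps mu xi zeta f g u w x) (vcnj (cv x))) = Z"
      unfolding Z_def
    proof (rule set_lebesgue_integral_cong[OF \<Omega>s], intro allI impI)
      fix x assume "x \<in> \<Omega>"
      hence "norm x \<le> R" using \<Omega>r Rr0 by (auto simp: dist_norm)
      hence "chi R x = 1" "gradchi R x = 0" using chi_inner[OF R] by auto
      hence "v x = u x" "cv x = w x" unfolding v_def cv_def by (simp_all add: ccross_def cvec_def vec3_eq)
      thus "cdot (T1 k eps mu xi zeta f g u w x) (vcnj (v x)) + cdot (T2 k eps mu xi zeta f g u w x) (vcnj (cv x))
          = cdot (T1 k eps mu xi zeta f g u w x) (vcnj (u x)) + cdot (T2 k eps mu xi zeta f g u w x) (vcnj (w x))" by simp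
    qed
    with eq have ZF: "Z = (\<integral>x. cdot (w x) (vcnj (cv x)) - complex_of_real (k^2) * cdot (u x) (vcnj (v x)) \<partial>lebesgue)"
      by simp
    define Kb where "Kb = 2 * C\<^sup>2 / (k * R ^ 5)"
    have fin: "Kb * (4 / 3 * (2 * R) ^ 3 * pi) \<le> e"
    proof -
      have "Kb * (4 / 3 * (2 * R) ^ 3 * pi) = K0 / R\<^sup>2" unfolding Kb_def K0_def using R k
        by (simp add: field_simps power2_eq_square power_numeral_reduce)
      also have "\<dots> \<le> K0 / R" using K00 R1 by (intro divide_left_mono) (auto simp: power2_eq_square)
      also have "\<dots> \<le> e" using RK e R K00 by (simp add: divide_le_eq mult.commute pos_divide_le_eq)
      finally show ?thesis .
    qed
    show ?thesis
    proof (cases "integrable lebesgue (\<lambda>x. cdot (w x) (vcnj (cv x)) - complex_of_real (k^2) * cdot (u x) (vcnj (v x)))")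
      case False
      thus ?thesis unfolding ZF using e by (simp add: not_integrable_integral_eq)
    next
      case True
      have "Im Z = (\<integral>x. Im (cdot (w x) (vcnj (cv x)) - complex_of_real (k^2) * cdot (u x) (vcnj (v x))) \<partial>lebesgue)"
        unfolding ZF using integral_bounded_linear[OF bounded_linear_Im True] by simp
      also have "\<dots> \<le> (\<integral>x. Kb * indicator (ball (0::R3) (2 * R)) x \<partial>lebesgue)"
      proof (rule integral_mono_AE)
        show "integrable lebesgue (\<lambda>x. Im (cdot (w x) (vcnj (cv x)) - complex_of_real (k^2) * cdot (u x) (vcnj (v x))))"
          by (rule integrable_Im[OF True])
        have l: "ball (0::R3) (2 * R) \<in> sets lebesgue" "emeasure lebesgue (ball (0::R3) (2 * R)) < \<infinity>"
          using lmeasurable_ball[of "0::R3" "2 * R"] unfolding fmeasurable_def by blast+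
        show "integrable lebesgue (\<lambda>x::R3. Kb * indicator (ball 0 (2 * R)) x)"
          by (rule Bochner_Integration.integrable_mult_right, rule integrable_real_indicator[OF l])
        show "AE x in lebesgue. Im (cdot (w x) (vcnj (cv x)) - complex_of_real (k^2) * cdot (u x) (vcnj (v x)))
              \<le> Kb * indicator (ball 0 (2 * R)) x"
          using sm
        proof (rule AE_mp, intro AE_I2 impI)
          fix x assume s: "R0 \<le> norm x \<longrightarrow> norm (ccross (w x) (cvec (x /\<^sub>R norm x)) - (\<i> * complex_of_real k) *s u x) \<le> C / (norm x)^2"
          show "Im (cdot (w x) (vcnj (cv x)) - complex_of_real (k^2) * cdot (u x) (vcnj (v x)))
              \<le> Kb * indicator (ball 0 (2 * R)) x"
            unfolding v_def cv_def Kb_def by (rule pointwise_cut[where k=k and R=R and R0=R0 and x=x and w=w and u=u and C=C, OF k R s RR0])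
        qed
      qed
      also have "\<dots> = Kb * (4 / 3 * (2 * R) ^ 3 * pi)"
      proof -
        have bv: "(\<integral>x. indicator (ball (0::R3) (2 * R)) x \<partial>lebesgue) = 4 / 3 * (2 * R) ^ 3 * pi"
          using R by (intro ball_volume_int) simp
        show ?thesis unfolding integral_mult_right_zero bv ..
      qed
      also have "\<dots> \<le> e" by (rule fin)
      finally show ?thesis by simp
    qed
  qed
  hence "Im Z \<le> 0" by (rule field_le_epsilon)
  thus ?thesis unfolding Z_def .
qed

lemma norm_transpose_M3: "norm (transpose (A::M3)) = norm A"
proof -
  have "(\<Sum>i\<in>UNIV. \<Sum>j\<in>UNIV. (cmod ((transpose A)$i$j))\<^sup>2) = (\<Sum>j\<in>UNIV. \<Sum>i\<in>UNIV. (cmod (A$i$j))\<^sup>2)"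
    unfolding transpose_def by simp
  also have "\<dots> = (\<Sum>i\<in>UNIV. \<Sum>j\<in>UNIV. (cmod (A$i$j))\<^sup>2)" by (rule sum.swap)
  finally show ?thesis unfolding frob_norm[symmetric] frob_def by simp
qed

lemma mm_row: "((A::M3) ** (B::M3))$i = transpose B *v (A$i)"
  by (simp add: vec_eq_iff matrix_matrix_mult_def matrix_vector_mult_def transpose_def mult.commute)

lemma norm_mm: "norm ((A::M3) ** (B::M3)) \<le> norm A * norm B"
proof -
  have "(norm (A ** B))\<^sup>2 = (\<Sum>i\<in>UNIV. (norm ((A ** B)$i))\<^sup>2)"
    unfolding norm_vec_def L2_set_def by (simp add: sum_nonneg)
  also have "\<dots> \<le> (\<Sum>i\<in>UNIV. (norm B * norm (A$i))\<^sup>2)"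
  proof (rule sum_mono)
    fix i
    have "norm ((A ** B)$i) \<le> norm B * norm (A$i)"
      unfolding mm_row using norm_mat_vec[of "transpose B" "A$i"] by (simp add: norm_transpose_M3)
    thus "(norm ((A ** B)$i))\<^sup>2 \<le> (norm B * norm (A$i))\<^sup>2" by (intro power_mono) auto
  qed
  also have "\<dots> = (norm B)\<^sup>2 * (\<Sum>i\<in>UNIV. (norm (A$i))\<^sup>2)" by (simp add: power_mult_distrib sum_distrib_left)
  also have "(\<Sum>i\<in>UNIV. (norm (A$i))\<^sup>2) = (norm A)\<^sup>2"
    unfolding norm_vec_def L2_set_def by (simp add: sum_nonneg)
  finally have "(norm (A ** B))\<^sup>2 \<le> (norm A * norm B)\<^sup>2" by (simp add: power_mult_distrib mult.commute)
  thus ?thesis by (rule power2_le_imp_le) simp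
qed

lemma scale_mm: "(r *\<^sub>R (A::M3)) ** (r *\<^sub>R B) = (r * r) *\<^sub>R (A ** B)"
  by (simp add: vec_eq_iff matrix_matrix_mult_def scaleR_sum_right)

lemma Linf_mm: "Linf_on D A \<Longrightarrow> Linf_on D B \<Longrightarrow> Linf_on D (\<lambda>x. A x ** B x)"
proof -
  assume a: "Linf_on D A" and b: "Linf_on D B"
  from a obtain BA where mA: "(\<lambda>x. indicator D x *\<^sub>R A x) \<in> borel_measurable lebesgue"
    and bA: "AE x in lebesgue. x \<in> D \<longrightarrow> norm (A x) \<le> BA" unfolding Linf_on_def by blast
  from b obtain BB where mB: "(\<lambda>x. indicator D x *\<^sub>R B x) \<in> borel_measurable lebesgue"
    and bB: "AE x in lebesgue. x \<in> D \<longrightarrow> norm (B x) \<le> BB" unfolding Linf_on_def by blast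
  have e: "indicator D x *\<^sub>R (A x ** B x) = (indicator D x *\<^sub>R A x) ** (indicator D x *\<^sub>R B x)" for x
    by (simp add: scale_mm ind_sq)
  have "(\<lambda>x. indicator D x *\<^sub>R (A x ** B x)) \<in> borel_measurable lebesgue" unfolding e using mA mB by measurable
  moreover have "AE x in lebesgue. x \<in> D \<longrightarrow> norm (A x ** B x) \<le> BA * BB"
    using bA bB
  proof (eventually_elim, intro impI)
    fix x assume "x \<in> D \<longrightarrow> norm (A x) \<le> BA" "x \<in> D \<longrightarrow> norm (B x) \<le> BB" "x \<in> D"
    hence "norm (A x) \<le> BA" "norm (B x) \<le> BB" by auto
    hence "norm (A x) * norm (B x) \<le> BA * BB" by (intro mult_mono) (auto intro: order_trans[OF norm_ge_zero])
    thus "norm (A x ** B x) \<le> BA * BB" using norm_mm[of "A x" "B x"] by linarith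
  qed
  ultimately show ?thesis unfolding Linf_on_def by blast
qed

lemma Linf_add: "Linf_on D A \<Longrightarrow> Linf_on D B \<Longrightarrow> Linf_on D (\<lambda>x. A x + B x)"
proof -
  assume a: "Linf_on D A" and b: "Linf_on D B"
  from a obtain BA where mA: "(\<lambda>x. indicator D x *\<^sub>R A x) \<in> borel_measurable lebesgue"
    and bA: "AE x in lebesgue. x \<in> D \<longrightarrow> norm (A x) \<le> BA" unfolding Linf_on_def by blast
  from b obtain BB where mB: "(\<lambda>x. indicator D x *\<^sub>R B x) \<in> borel_measurable lebesgue"
    and bB: "AE x in lebesgue. x \<in> D \<longrightarrow> norm (B x) \<le> BB" unfolding Linf_on_def by blast
  have e: "indicator D x *\<^sub>R (A x + B x) = (indicator D x *\<^sub>R A x) + (indicator D x *\<^sub>R B x)" for x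
    by (simp add: scaleR_add_right)
  have "(\<lambda>x. indicator D x *\<^sub>R (A x + B x)) \<in> borel_measurable lebesgue" unfolding e using mA mB by measurable
  moreover have "AE x in lebesgue. x \<in> D \<longrightarrow> norm (A x + B x) \<le> BA + BB"
    using bA bB
  proof (eventually_elim, intro impI)
    fix x assume "x \<in> D \<longrightarrow> norm (A x) \<le> BA" "x \<in> D \<longrightarrow> norm (B x) \<le> BB" "x \<in> D"
    thus "norm (A x + B x) \<le> BA + BB" using norm_triangle_ineq[of "A x" "B x"] by auto
  qed
  ultimately show ?thesis unfolding Linf_on_def by blast
qed

lemma Linf_scale: "Linf_on D A \<Longrightarrow> Linf_on D (\<lambda>x. (c::real) *\<^sub>R A x)"
proof -
  assume a: "Linf_on D A"
  from a obtain BA where mA: "(\<lambda>x. indicator D x *\<^sub>R A x) \<in> borel_measurable lebesgue"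
    and bA: "AE x in lebesgue. x \<in> D \<longrightarrow> norm (A x) \<le> BA" unfolding Linf_on_def by blast
  have e: "indicator D x *\<^sub>R (c *\<^sub>R A x) = c *\<^sub>R (indicator D x *\<^sub>R A x)" for x by simp
  have "(\<lambda>x. indicator D x *\<^sub>R (c *\<^sub>R A x)) \<in> borel_measurable lebesgue" unfolding e using mA by measurable
  moreover have "AE x in lebesgue. x \<in> D \<longrightarrow> norm (c *\<^sub>R A x) \<le> \<bar>c\<bar> * BA"
    using bA by eventually_elim (auto intro: mult_left_mono)
  ultimately show ?thesis unfolding Linf_on_def by blast
qed

lemma Linf_diff: "Linf_on D A \<Longrightarrow> Linf_on D B \<Longrightarrow> Linf_on D (\<lambda>x. A x - B x)"
  using Linf_add[of D A "\<lambda>x. (-1) *\<^sub>R B x"] Linf_scale[of D B "-1"] by simp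

lemma Linf_const: "D \<in> sets lebesgue \<Longrightarrow> Linf_on D (\<lambda>x. C)"
  unfolding Linf_on_def by (auto intro!: exI[of _ "norm C"])

lemma L2on_Linf: "L2on S F \<Longrightarrow> Linf_on S M \<Longrightarrow> L2on S (\<lambda>x. (M x :: M3) *v F x)"
  unfolding Linf_on_def using L2on_mat by blast

lemma scaleR_smult: "r *\<^sub>R (c *s (v::C3)) = c *s (r *\<^sub>R v)"
  by (simp add: vec_eq_iff scR_comp vector_scalar_mult_def mult_ac del: vector_scaleR_component)

lemma L2on_smult:
  assumes F: "L2on S F"
  shows "L2on S (\<lambda>x. (c::complex) *s (F x :: C3))"
proof -
  have m: "(\<lambda>x. indicator S x *\<^sub>R F x) \<in> borel_measurable lebesgue"
    and i: "integrable lebesgue (\<lambda>x. (norm (indicator S x *\<^sub>R F x))\<^sup>2)" using F unfolding L2on_iff by auto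
  have "(\<lambda>x. c *s (indicator S x *\<^sub>R F x)) \<in> borel_measurable lebesgue" using m by measurable
  hence m2: "(\<lambda>x. indicator S x *\<^sub>R (c *s F x)) \<in> borel_measurable lebesgue" by (simp only: scaleR_smult)
  have e: "(norm (indicator S x *\<^sub>R (c *s F x)))\<^sup>2 = (cmod c)\<^sup>2 * (norm (indicator S x *\<^sub>R F x))\<^sup>2" for x
    unfolding scaleR_smult norm_smult by (simp add: power_mult_distrib)
  have "integrable lebesgue (\<lambda>x. (norm (indicator S x *\<^sub>R (c *s F x)))\<^sup>2)" unfolding e using i by simp
  thus ?thesis unfolding L2on_iff using m2 by simp
qed

lemma L2on_diff: "L2on S F \<Longrightarrow> L2on S G \<Longrightarrow> L2on S (\<lambda>x. F x - (G x :: C3))"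
proof -
  assume a: "L2on S F" "L2on S G"
  have "(\<lambda>x. F x - G x) = (\<lambda>x. F x + (-1) *s G x)" by (simp add: fun_eq_iff vec_eq_iff vector_scalar_mult_def)
  thus ?thesis using L2on_add[OF a(1) L2on_smult[OF a(2), of "-1"]] by simp
qed

lemma set_int_nonneg: "(\<And>x. (F x::real) \<ge> 0) \<Longrightarrow> (LINT x:A|M. F x) \<ge> 0"
  unfolding set_lebesgue_integral_def by (intro integral_nonneg_AE) (auto simp: indicator_def)

lemma set_int_Im: "set_integrable M A F \<Longrightarrow> set_integrable M A (\<lambda>x. Im (F x))"
  unfolding set_integrable_def using integrable_Im[of M "\<lambda>x. indicator A x *\<^sub>R F x"] by simp

lemma sq_le_2: "(norm ((a::C3) - b))\<^sup>2 \<le> 2 * (norm a)\<^sup>2 + 2 * (norm b)\<^sup>2"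
proof -
  have "norm (a - b) \<le> norm a + norm b" by (rule norm_triangle_ineq4)
  hence "(norm (a - b))\<^sup>2 \<le> (norm a + norm b)\<^sup>2" by (intro power_mono) auto
  also have "\<dots> \<le> 2 * (norm a)\<^sup>2 + 2 * (norm b)\<^sup>2"
  proof -
    have "0 \<le> (norm a - norm b)\<^sup>2" by simp
    thus ?thesis by (simp add: power2_eq_square algebra_simps)
  qed
  finally show ?thesis .
qed

lemma real_sq_bound: "(C1 * A + C2 * B)\<^sup>2 \<le> 2 * C1\<^sup>2 * A\<^sup>2 + 2 * C2\<^sup>2 * (B::real)\<^sup>2"
proof -
  have "0 \<le> (C1 * A - C2 * B)\<^sup>2" by simp
  thus ?thesis by (simp add: power2_eq_square algebra_simps)
qed

theorem mainTheorem3: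
  fixes k :: real and \<Omega> :: "(real^3) set"
    and eps mu xi zeta :: "real^3 \<Rightarrow> complex^3^3"
  assumes k_pos: "k > 0"
    and dom: "lipschitz_domain \<Omega>" and bdd: "bounded \<Omega>"
    and ext_conn: "connected (- closure \<Omega>)"
    and outside: "\<forall>x. x \<notin> closure \<Omega> \<longrightarrow> eps x = mat 1 \<and> mu x = mat 1 \<and> xi x = 0 \<and> zeta x = 0"
    and AI: "assumption_I \<Omega> eps mu xi zeta"
    and known_exists: "\<forall>f g. L2on \<Omega> f \<and> L2on \<Omega> g \<longrightarrow> (\<exists>u w. solves k \<Omega> eps mu xi zeta f g u w)"
    and known_unique: "\<forall>f g u w u' w'. L2on \<Omega> f \<and> L2on \<Omega> g \<and> solves k \<Omega> eps mu xi zeta f g u w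
                         \<and> solves k \<Omega> eps mu xi zeta f g u' w' \<longrightarrow> (AE x in lebesgue. u x = u' x)"
    and known_bound: "\<exists>c. \<forall>f g u w. L2on \<Omega> f \<and> L2on \<Omega> g \<and> solves k \<Omega> eps mu xi zeta f g u w
                         \<longrightarrow> normX \<Omega> u w \<le> c * normX \<Omega> f g"
    and known_est: "\<exists>C1 C2. C1 > 0 \<and> C2 > 0 \<and> (\<forall>f g u w. L2on \<Omega> f \<and> L2on \<Omega> g \<and> solves k \<Omega> eps mu xi zeta f g u w
                         \<longrightarrow> normX \<Omega> u w \<le> C1 * L2norm \<Omega> (\<lambda>x. f x + u x) + C2 * L2norm \<Omega> (\<lambda>x. g x + w x))"
  shows "\<exists>\<gamma>>0. \<forall>h u w. L2t h \<and>
           solves k \<Omega> eps mu xi zeta (herglotz1 k h) (ccurl (herglotz1 k h)) u w \<longrightarrow>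
           (let f = herglotz1 k h; g = ccurl (herglotz1 k h);
                TT = (T1 k eps mu xi zeta f g u w, T2 k eps mu xi zeta f g u w)
            in Re ((ipX \<Omega> TT (f, g) - ipX \<Omega> (f, g) TT) / (2 * \<i>)) \<ge> \<gamma> * (normX \<Omega> f g)^2)"
proof -
  have \<Omega>o: "open \<Omega>" using dom unfolding lipschitz_domain_def by blast
  have \<Omega>s: "\<Omega> \<in> sets lebesgue" using lmeasurable_open[OF bdd \<Omega>o] fmeasurableD by blast
  obtain r0 where \<Omega>r: "\<Omega> \<subseteq> ball 0 r0" using bdd bounded_subset_ballD by blast
  have k0: "k \<ge> 0" using k_pos by simp
  have Leps: "Linf_on \<Omega> eps" and Lminv: "Linf_on \<Omega> (\<lambda>x. matrix_inv (mu x))"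
    and Lxi: "Linf_on \<Omega> xi" and Lzeta: "Linf_on \<Omega> zeta"
    and symAE: "AE x in lebesgue. x \<in> \<Omega> \<longrightarrow> symmetric_mat (eps x) \<and> symmetric_mat (mu x) \<and>
        symmetric_mat (matrix_inv (mu x)) \<and> symmetric_mat (xi x) \<and> symmetric_mat (zeta x)"
    using AI unfolding assumption_I_def by blast+
  have ex: "\<exists>c1 c2 \<alpha> \<beta> s t. c1 > 0 \<and> c2 > 0 \<and> \<alpha> > 0 \<and> \<beta> > 0 \<and>
        (AE x in lebesgue. x \<in> \<Omega> \<longrightarrow> (\<forall>a::C3.
           Re (cdot (matrix_inv (mu x) *v a) (vcnj a)) \<ge> c1 * (norm a)^2 \<and>
           Re (cdot ((eps x - xi x ** matrix_inv (mu x) ** zeta x) *v a) (vcnj a)) \<ge> c2 * (norm a)^2 \<and>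
           - Im (cdot (matrix_inv (mu x) *v a) (vcnj a)) \<ge> \<alpha> * (norm a)^2 \<and>
           Im (cdot ((eps x - xi x ** matrix_inv (mu x) ** zeta x) *v a) (vcnj a)) \<ge> \<beta> * (norm a)^2)) \<and>
        s^2 + t^2 < 2 * min (c1 * c2) (\<alpha> * \<beta>) \<and>
           (AE x in lebesgue. x \<in> \<Omega> \<longrightarrow>
              frob (matrix_inv (mu x) ** xi x) \<le> s \<and> frob (matrix_inv (mu x) ** zeta x) \<le> t)"
    using AI unfolding assumption_I_def by (elim conjE exE) (intro exI conjI, assumption+)
  then obtain c1 c2 \<alpha> \<beta> s t where pos: "c1 > 0" "c2 > 0" "\<alpha> > 0" "\<beta> > 0"
    and coerAE: "AE x in lebesgue. x \<in> \<Omega> \<longrightarrow> (\<forall>a::C3.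
           Re (cdot (matrix_inv (mu x) *v a) (vcnj a)) \<ge> c1 * (norm a)^2 \<and>
           Re (cdot ((eps x - xi x ** matrix_inv (mu x) ** zeta x) *v a) (vcnj a)) \<ge> c2 * (norm a)^2 \<and>
           - Im (cdot (matrix_inv (mu x) *v a) (vcnj a)) \<ge> \<alpha> * (norm a)^2 \<and>
           Im (cdot ((eps x - xi x ** matrix_inv (mu x) ** zeta x) *v a) (vcnj a)) \<ge> \<beta> * (norm a)^2)"
    and st: "s^2 + t^2 < 2 * min (c1 * c2) (\<alpha> * \<beta>)"
    and frAE: "AE x in lebesgue. x \<in> \<Omega> \<longrightarrow>
              frob (matrix_inv (mu x) ** xi x) \<le> s \<and> frob (matrix_inv (mu x) ** zeta x) \<le> t"
    by (elim exE conjE)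
  obtain C1 C2 where C: "C1 > 0" "C2 > 0" and est: "\<forall>f g u w. L2on \<Omega> f \<and> L2on \<Omega> g \<and> solves k \<Omega> eps mu xi zeta f g u w
                         \<longrightarrow> normX \<Omega> u w \<le> C1 * L2norm \<Omega> (\<lambda>x. f x + u x) + C2 * L2norm \<Omega> (\<lambda>x. g x + w x)"
    using known_est by blast
  define s' where "s' = \<bar>s\<bar>"
  define t' where "t' = \<bar>t\<bar>"
  have s'0: "s' \<ge> 0" and t'0: "t' \<ge> 0" unfolding s'_def t'_def by auto
  have sq: "s'^2 + t'^2 < 2 * min (c1 * c2) (\<alpha> * \<beta>)" using st unfolding s'_def t'_def by simp
  have st': "((s' + t') / 2)\<^sup>2 < \<alpha> * \<beta>"
  proof -
    have "0 \<le> (s' - t')\<^sup>2" by simp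
    hence "(s' + t')\<^sup>2 \<le> 2 * (s'^2 + t'^2)" by (simp add: power2_eq_square algebra_simps)
    moreover have "min (c1 * c2) (\<alpha> * \<beta>) \<le> \<alpha> * \<beta>" by simp
    ultimately show ?thesis using sq by (simp add: power_divide)
  qed
  define lam0 where "lam0 = lamc \<alpha> \<beta> s' t' * min (k^2) 1"
  have lam0: "lam0 > 0" unfolding lam0_def using lamc_pos[OF pos(3,4) s'0 t'0 sq] k_pos by simp
  define Cm where "Cm = max (C1\<^sup>2) (C2\<^sup>2)"
  have Cm0: "Cm \<ge> 0" unfolding Cm_def by (rule order_trans[OF zero_le_power2 max.cobounded1])
  define \<gamma> where "\<gamma> = lam0 / (2 + 4 * Cm)"
  have \<gamma>0: "\<gamma> > 0" unfolding \<gamma>_def using lam0 Cm0 by simp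
  show ?thesis
  proof (intro exI[of _ \<gamma>] conjI allI impI)
    show "\<gamma> > 0" by (rule \<gamma>0)
    fix h u w
    assume hs: "L2t h \<and> solves k \<Omega> eps mu xi zeta (herglotz1 k h) (ccurl (herglotz1 k h)) u w"
    define f where "f = herglotz1 k h"
    define g where "g = ccurl f"
    have h: "L2t h" using hs by blast
    have sol: "solves k \<Omega> eps mu xi zeta f g u w" using hs unfolding f_def g_def by blast
    define TT1 where "TT1 = T1 k eps mu xi zeta f g u w"
    define TT2 where "TT2 = T2 k eps mu xi zeta f g u w"
    have goal_eq: "(let f = herglotz1 k h; g = ccurl (herglotz1 k h);
                TT = (T1 k eps mu xi zeta f g u w, T2 k eps mu xi zeta f g u w)
            in Re ((ipX \<Omega> TT (f, g) - ipX \<Omega> (f, g) TT) / (2 * \<i>)) \<ge> \<gamma> * (normX \<Omega> f g)^2)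
       = (Re ((ipX \<Omega> (TT1, TT2) (f, g) - ipX \<Omega> (f, g) (TT1, TT2)) / (2 * \<i>)) \<ge> \<gamma> * (normX \<Omega> f g)^2)"
      unfolding Let_def f_def g_def TT1_def TT2_def ..
    have Hl: "Hloc_curl u w" using sol unfolding solves_def by blast
    have uL: "L2on \<Omega> u" and wL: "L2on \<Omega> w" using Hl \<Omega>r \<Omega>s unfolding Hloc_curl_def by (auto intro: L2on_of_loc)
    have fL: "L2on \<Omega> f" unfolding f_def by (rule L2on_cont[OF herglotz_cont[OF h k0] bdd \<Omega>s])
    have gL: "L2on \<Omega> g" unfolding g_def f_def by (rule L2on_cont[OF herglotz_curl_cont[OF h k0] bdd \<Omega>s])
    have aL: "L2on \<Omega> (\<lambda>x. u x + f x)" by (rule L2on_add[OF uL fL])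
    have bL: "L2on \<Omega> (\<lambda>x. w x + g x)" by (rule L2on_add[OF wL gL])
    have LI: "Linf_on \<Omega> (\<lambda>x. mat 1 :: M3)" by (rule Linf_const[OF \<Omega>s])
    have LP1: "Linf_on \<Omega> (\<lambda>x. Pm eps x - xi x ** matrix_inv (mu x) ** zeta x)"
      unfolding Pm_def by (intro Linf_diff Linf_mm Leps LI Lxi Lminv Lzeta)
    have LP2: "Linf_on \<Omega> (\<lambda>x. xi x ** matrix_inv (mu x))" by (intro Linf_mm Lxi Lminv)
    have LP3: "Linf_on \<Omega> (\<lambda>x. matrix_inv (mu x) ** zeta x)" by (intro Linf_mm Lzeta Lminv)
    have LP4: "Linf_on \<Omega> (\<lambda>x. Qm mu x)" unfolding Qm_def by (intro Linf_diff LI Lminv)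
    have T1L: "L2on \<Omega> TT1" unfolding TT1_def T1_def
      by (intro L2on_diff L2on_smult L2on_Linf[OF aL LP1] L2on_Linf[OF bL LP2])
    have T2L: "L2on \<Omega> TT2" unfolding TT2_def T2_def
      by (intro L2on_add L2on_smult L2on_Linf[OF aL LP3] L2on_Linf[OF bL LP4])
    define z where "z = ipX \<Omega> (TT1, TT2) (f, g)"
    have Q: "Re ((ipX \<Omega> (TT1, TT2) (f, g) - ipX \<Omega> (f, g) (TT1, TT2)) / (2 * \<i>)) = Im z"
    proof -
      have "ipX \<Omega> (f, g) (TT1, TT2) = cnj z"
        unfolding z_def ipX_def fst_conv snd_conv ip_swap[of \<Omega> f TT1] ip_swap[of \<Omega> g TT2] by simp
      thus ?thesis unfolding z_def[symmetric] by (simp add: Re_im_trick)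
    qed
    define Z1 where "Z1 = (LINT x:\<Omega>|lebesgue. cdot (TT1 x) (vcnj (u x + f x)) + cdot (TT2 x) (vcnj (w x + g x)))"
    define Z2 where "Z2 = (LINT x:\<Omega>|lebesgue. cdot (TT1 x) (vcnj (u x)) + cdot (TT2 x) (vcnj (w x)))"
    have i1f: "set_integrable lebesgue \<Omega> (\<lambda>x. cdot (TT1 x) (vcnj (f x)))" by (rule set_int_cdot[OF T1L fL])
    have i2g: "set_integrable lebesgue \<Omega> (\<lambda>x. cdot (TT2 x) (vcnj (g x)))" by (rule set_int_cdot[OF T2L gL])
    have i1u: "set_integrable lebesgue \<Omega> (\<lambda>x. cdot (TT1 x) (vcnj (u x)))" by (rule set_int_cdot[OF T1L uL])
    have i2w: "set_integrable lebesgue \<Omega> (\<lambda>x. cdot (TT2 x) (vcnj (w x)))" by (rule set_int_cdot[OF T2L wL])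
    have i1a: "set_integrable lebesgue \<Omega> (\<lambda>x. cdot (TT1 x) (vcnj (u x + f x)))" by (rule set_int_cdot[OF T1L aL])
    have i2b: "set_integrable lebesgue \<Omega> (\<lambda>x. cdot (TT2 x) (vcnj (w x + g x)))" by (rule set_int_cdot[OF T2L bL])
    have zint: "z = (LINT x:\<Omega>|lebesgue. cdot (TT1 x) (vcnj (f x)) + cdot (TT2 x) (vcnj (g x)))"
      unfolding z_def ipX_def ip_def by (simp add: set_integral_add(2)[OF i1f i2g])
    have fgint: "set_integrable lebesgue \<Omega> (\<lambda>x. cdot (TT1 x) (vcnj (f x)) + cdot (TT2 x) (vcnj (g x)))"
      using i1f i2g by (rule set_integral_add(1))
    have uwint: "set_integrable lebesgue \<Omega> (\<lambda>x. cdot (TT1 x) (vcnj (u x)) + cdot (TT2 x) (vcnj (w x)))"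
      using i1u i2w by (rule set_integral_add(1))
    have abint: "set_integrable lebesgue \<Omega> (\<lambda>x. cdot (TT1 x) (vcnj (u x + f x)) + cdot (TT2 x) (vcnj (w x + g x)))"
      using i1a i2b by (rule set_integral_add(1))
    have Z1split: "Z1 = z + Z2"
    proof -
      have pw: "cdot (TT1 x) (vcnj (u x + f x)) + cdot (TT2 x) (vcnj (w x + g x))
          = (cdot (TT1 x) (vcnj (f x)) + cdot (TT2 x) (vcnj (g x))) + (cdot (TT1 x) (vcnj (u x)) + cdot (TT2 x) (vcnj (w x)))" for x
        by (simp add: vcnj_add cdot_add_right)
      show ?thesis unfolding Z1_def pw zint Z2_def by (rule set_integral_add(2)[OF fgint uwint])
    qed
    have ImZ2: "Im Z2 \<le> 0" unfolding Z2_def TT1_def TT2_def by (rule cutoff_bound[OF k_pos \<Omega>r \<Omega>s sol])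
    define S where "S = (LINT x:\<Omega>|lebesgue. (norm (u x + f x))\<^sup>2 + (norm (w x + g x))\<^sup>2)"
    have na: "set_integrable lebesgue \<Omega> (\<lambda>x. (norm (u x + f x))\<^sup>2)" by (rule set_int_norm[OF aL])
    have nb: "set_integrable lebesgue \<Omega> (\<lambda>x. (norm (w x + g x))\<^sup>2)" by (rule set_int_norm[OF bL])
    have nab: "set_integrable lebesgue \<Omega> (\<lambda>x. (norm (u x + f x))\<^sup>2 + (norm (w x + g x))\<^sup>2)"
      using na nb by (rule set_integral_add(1))
    have ImZ1: "Im Z1 \<ge> lam0 * S"
    proof -
      have "Im Z1 = (LINT x:\<Omega>|lebesgue. Im (cdot (TT1 x) (vcnj (u x + f x)) + cdot (TT2 x) (vcnj (w x + g x))))"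
        unfolding Z1_def by (rule set_integral_Im[OF abint])
      moreover have "(LINT x:\<Omega>|lebesgue. lam0 * ((norm (u x + f x))\<^sup>2 + (norm (w x + g x))\<^sup>2))
          \<le> (LINT x:\<Omega>|lebesgue. Im (cdot (TT1 x) (vcnj (u x + f x)) + cdot (TT2 x) (vcnj (w x + g x))))"
      proof (rule set_integral_mono_AE)
        show "set_integrable lebesgue \<Omega> (\<lambda>x. lam0 * ((norm (u x + f x))\<^sup>2 + (norm (w x + g x))\<^sup>2))"
          using nab unfolding set_integrable_def by (simp add: scaleR_conv_of_real mult.left_commute)
        show "set_integrable lebesgue \<Omega> (\<lambda>x. Im (cdot (TT1 x) (vcnj (u x + f x)) + cdot (TT2 x) (vcnj (w x + g x))))"
          by (rule set_int_Im[OF abint])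
        show "AE x\<in>\<Omega> in lebesgue. lam0 * ((norm (u x + f x))\<^sup>2 + (norm (w x + g x))\<^sup>2)
              \<le> Im (cdot (TT1 x) (vcnj (u x + f x)) + cdot (TT2 x) (vcnj (w x + g x)))"
          using symAE coerAE frAE
        proof (eventually_elim, intro impI)
          fix x
          assume sy: "x \<in> \<Omega> \<longrightarrow> symmetric_mat (eps x) \<and> symmetric_mat (mu x) \<and>
             symmetric_mat (matrix_inv (mu x)) \<and> symmetric_mat (xi x) \<and> symmetric_mat (zeta x)"
            and co: "x \<in> \<Omega> \<longrightarrow> (\<forall>a::C3.
             Re (cdot (matrix_inv (mu x) *v a) (vcnj a)) \<ge> c1 * (norm a)^2 \<and>
             Re (cdot ((eps x - xi x ** matrix_inv (mu x) ** zeta x) *v a) (vcnj a)) \<ge> c2 * (norm a)^2 \<and>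
             - Im (cdot (matrix_inv (mu x) *v a) (vcnj a)) \<ge> \<alpha> * (norm a)^2 \<and>
             Im (cdot ((eps x - xi x ** matrix_inv (mu x) ** zeta x) *v a) (vcnj a)) \<ge> \<beta> * (norm a)^2)"
            and fr: "x \<in> \<Omega> \<longrightarrow> frob (matrix_inv (mu x) ** xi x) \<le> s \<and> frob (matrix_inv (mu x) ** zeta x) \<le> t"
            and xo: "x \<in> \<Omega>"
          have fs: "frob (matrix_inv (mu x) ** xi x) \<le> s'" using fr xo unfolding s'_def by auto
          have ft: "frob (matrix_inv (mu x) ** zeta x) \<le> t'" using fr xo unfolding t'_def by auto
          have c: "Im (cdot (complex_of_real (k^2) *s (((eps x - mat 1) - xi x ** matrix_inv (mu x) ** zeta x) *v (u x + f x))
                     - (\<i> * complex_of_real k) *s ((xi x ** matrix_inv (mu x)) *v (w x + g x))) (vcnj (u x + f x))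
               + cdot ((\<i> * complex_of_real k) *s ((matrix_inv (mu x) ** zeta x) *v (u x + f x)) + (mat 1 - matrix_inv (mu x)) *v (w x + g x)) (vcnj (w x + g x)))
             \<ge> lamc \<alpha> \<beta> s' t' * min (k^2) 1 * ((norm (u x + f x))^2 + (norm (w x + g x))^2)"
          proof (rule coercive[OF k_pos pos(3,4) st' fs ft])
            show "symmetric_mat (xi x)" "symmetric_mat (matrix_inv (mu x))" using sy xo by simp_all
            have all: "\<forall>a::C3. - Im (cdot (matrix_inv (mu x) *v a) (vcnj a)) \<ge> \<alpha> * (norm a)^2 \<and>
               Im (cdot ((eps x - xi x ** matrix_inv (mu x) ** zeta x) *v a) (vcnj a)) \<ge> \<beta> * (norm a)^2"
              using co xo by blast
            show "- Im (cdot (matrix_inv (mu x) *v (w x + g x)) (vcnj (w x + g x))) \<ge> \<alpha> * (norm (w x + g x))^2"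
              using all by blast
            show "Im (cdot ((eps x - xi x ** matrix_inv (mu x) ** zeta x) *v (u x + f x)) (vcnj (u x + f x))) \<ge> \<beta> * (norm (u x + f x))^2"
              using all by blast
          qed
          show "lam0 * ((norm (u x + f x))\<^sup>2 + (norm (w x + g x))\<^sup>2)
              \<le> Im (cdot (TT1 x) (vcnj (u x + f x)) + cdot (TT2 x) (vcnj (w x + g x)))"
            using c unfolding lam0_def TT1_def TT2_def T1_def T2_def Pm_def Qm_def by simp
        qed
      qed
      moreover have "(LINT x:\<Omega>|lebesgue. lam0 * ((norm (u x + f x))\<^sup>2 + (norm (w x + g x))\<^sup>2)) = lam0 * S"
        unfolding S_def by (rule set_integral_mult_right)
      ultimately show ?thesis by linarith
    qed
    define Ia where "Ia = (LINT x:\<Omega>|lebesgue. (norm (u x + f x))\<^sup>2)"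
    define Ib where "Ib = (LINT x:\<Omega>|lebesgue. (norm (w x + g x))\<^sup>2)"
    define Iu where "Iu = (LINT x:\<Omega>|lebesgue. (norm (u x))\<^sup>2 + (norm (w x))\<^sup>2)"
    define If where "If = (LINT x:\<Omega>|lebesgue. (norm (f x))\<^sup>2 + (norm (g x))\<^sup>2)"
    have SI: "S = Ia + Ib" unfolding S_def Ia_def Ib_def by (rule set_integral_add(2)[OF na nb])
    have Ia0: "Ia \<ge> 0" unfolding Ia_def by (rule set_int_nonneg) simp
    have Ib0: "Ib \<ge> 0" unfolding Ib_def by (rule set_int_nonneg) simp
    have Iu0: "Iu \<ge> 0" unfolding Iu_def by (rule set_int_nonneg) simp
    have If0: "If \<ge> 0" unfolding If_def by (rule set_int_nonneg) simp
    have nuw: "set_integrable lebesgue \<Omega> (\<lambda>x. (norm (u x))\<^sup>2 + (norm (w x))\<^sup>2)"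
      using set_int_norm[OF uL] set_int_norm[OF wL] by (rule set_integral_add(1))
    have nfg: "set_integrable lebesgue \<Omega> (\<lambda>x. (norm (f x))\<^sup>2 + (norm (g x))\<^sup>2)"
      using set_int_norm[OF fL] set_int_norm[OF gL] by (rule set_integral_add(1))
    have i2S: "set_integrable lebesgue \<Omega> (\<lambda>x. 2 * ((norm (u x + f x))\<^sup>2 + (norm (w x + g x))\<^sup>2))"
      by (rule set_integrable_mult_right, rule nab)
    have i2U: "set_integrable lebesgue \<Omega> (\<lambda>x. 2 * ((norm (u x))\<^sup>2 + (norm (w x))\<^sup>2))"
      by (rule set_integrable_mult_right, rule nuw)
    have If_le: "If \<le> 2 * S + 2 * Iu"
    proof -
      have "If \<le> (LINT x:\<Omega>|lebesgue. 2 * ((norm (u x + f x))\<^sup>2 + (norm (w x + g x))\<^sup>2) + 2 * ((norm (u x))\<^sup>2 + (norm (w x))\<^sup>2))"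
        unfolding If_def
      proof (rule set_integral_mono)
        show "set_integrable lebesgue \<Omega> (\<lambda>x. (norm (f x))\<^sup>2 + (norm (g x))\<^sup>2)" by (rule nfg)
        show "set_integrable lebesgue \<Omega> (\<lambda>x. 2 * ((norm (u x + f x))\<^sup>2 + (norm (w x + g x))\<^sup>2) + 2 * ((norm (u x))\<^sup>2 + (norm (w x))\<^sup>2))"
          using i2S i2U by (rule set_integral_add(1))
        fix x
        have "(norm (f x))\<^sup>2 \<le> 2 * (norm (u x + f x))\<^sup>2 + 2 * (norm (u x))\<^sup>2"
          using sq_le_2[of "u x + f x" "u x"] by simp
        moreover have "(norm (g x))\<^sup>2 \<le> 2 * (norm (w x + g x))\<^sup>2 + 2 * (norm (w x))\<^sup>2"
          using sq_le_2[of "w x + g x" "w x"] by simp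
        ultimately show "(norm (f x))\<^sup>2 + (norm (g x))\<^sup>2
            \<le> 2 * ((norm (u x + f x))\<^sup>2 + (norm (w x + g x))\<^sup>2) + 2 * ((norm (u x))\<^sup>2 + (norm (w x))\<^sup>2)" by simp
      qed
      also have "\<dots> = 2 * S + 2 * Iu"
        unfolding S_def Iu_def set_integral_add(2)[OF i2S i2U] set_integral_mult_right ..
      finally show ?thesis .
    qed
    have Iu_le: "Iu \<le> 2 * Cm * S"
    proof -
      have e1: "L2norm \<Omega> (\<lambda>x. f x + u x) = sqrt Ia" unfolding L2norm_def Ia_def by (simp add: add.commute)
      have e2: "L2norm \<Omega> (\<lambda>x. g x + w x) = sqrt Ib" unfolding L2norm_def Ib_def by (simp add: add.commute)
      have nu: "normX \<Omega> u w = sqrt Iu" unfolding normX_def Iu_def ..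
      have "normX \<Omega> u w \<le> C1 * L2norm \<Omega> (\<lambda>x. f x + u x) + C2 * L2norm \<Omega> (\<lambda>x. g x + w x)"
        using est fL gL sol by blast
      hence "sqrt Iu \<le> C1 * sqrt Ia + C2 * sqrt Ib" unfolding e1 e2 nu .
      hence "(sqrt Iu)\<^sup>2 \<le> (C1 * sqrt Ia + C2 * sqrt Ib)\<^sup>2" using Iu0 by (intro power_mono) auto
      also have "\<dots> \<le> 2 * C1\<^sup>2 * (sqrt Ia)\<^sup>2 + 2 * C2\<^sup>2 * (sqrt Ib)\<^sup>2" by (rule real_sq_bound)
      also have "\<dots> = 2 * C1\<^sup>2 * Ia + 2 * C2\<^sup>2 * Ib" using Ia0 Ib0 by simp
      also have "\<dots> \<le> 2 * Cm * Ia + 2 * Cm * Ib" unfolding Cm_def using Ia0 Ib0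
        by (intro add_mono mult_right_mono mult_left_mono) auto
      finally show ?thesis using Iu0 SI by (simp add: algebra_simps)
    qed
    have nfgI: "(normX \<Omega> f g)\<^sup>2 = If" unfolding normX_def If_def[symmetric] using If0 by simp
    have "Im z \<ge> lam0 * S" using ImZ1 ImZ2 Z1split by simp
    moreover have "If \<le> (2 + 4 * Cm) * S" using If_le Iu_le by (simp add: algebra_simps)
    ultimately have "\<gamma> * If \<le> Im z"
    proof -
      assume a: "Im z \<ge> lam0 * S" "If \<le> (2 + 4 * Cm) * S"
      have p: "2 + 4 * Cm > 0" using Cm0 by simp
      have "\<gamma> * If \<le> \<gamma> * ((2 + 4 * Cm) * S)" using a(2) \<gamma>0 by (intro mult_left_mono) auto
      also have "\<dots> = lam0 * S" unfolding \<gamma>_def using p by simp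
      finally show ?thesis using a(1) by simp
    qed
    thus "let f = herglotz1 k h; g = ccurl (herglotz1 k h);
                TT = (T1 k eps mu xi zeta f g u w, T2 k eps mu xi zeta f g u w)
            in Re ((ipX \<Omega> TT (f, g) - ipX \<Omega> (f, g) TT) / (2 * \<i>)) \<ge> \<gamma> * (normX \<Omega> f g)^2"
      unfolding goal_eq Q nfgI .
  qed
qed

end
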